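(* Let $n\ge 1$, let $a_1,\dots,a_n$ be distinct real numbers, and let $F(a)=\sum_{k=0}^n A_k a^k=\prod_{i=1}^n(a-a_i)$. Fix signs $\epsilon_i\in\{\pm1\}$ and real numbers $\xi_1,\dots,\xi_n,\nu_n$, put $\Delta_i=\epsilon_i(a-a_i)$ and $$x(a)=\frac{\nu_n}{2}\,a+\sum_{i=1}^n\frac{\xi_i}{\sqrt{\Delta_i}},$$ and work on an open interval $I\subset(0,\infty)$ on which all $\Delta_i>0$ and $\dot x=dx/da\neq0$. On $M=I\times\mathbb{R}$ with coordinates $(a,y)$ consider $H=\Pi^2+a\,P_y^2$ with $\Pi=\frac{a}{\dot x}P_a$. Define $$G=\sum_{k=0}^n A_{n-k}H^{n-k}P_y^{2k+1},\quad Q_1=\sum_{k=0}^n\tilde b_k\,H^{n-k}\,\Pi\,P_y^{2k},\quad Q_2=\sum_{k=0}^n\tilde c_k\,H^{n-k}P_y^{2k+1},$$ where for $k=0,\dots,n$ $$\tilde b_k=(-1)^k\Big(\nu_n\sigma_k+\sum_{i=1}^n\frac{\xi_i}{\sqrt{\Delta_i}}\sigma^i_{k-1}\Big),$$ $$\tilde c_k=\frac{(-1)^{k+1}}{2}\Big\{\nu_n^2\,a\,\sigma_k+2\nu_n\sum_{i=1}^n\frac{\xi_i}{\sqrt{\Delta_i}}\big(\sigma^i_k+a\,\sigma^i_{k-1}\big)+\sum_{i=1}^n\frac{\xi_i^2}{\Delta_i}\sigma^i_{k-1}+\sum_{i\neq j}\frac{\xi_i\xi_j}{\sqrt{\Delta_i\Delta_j}}\big(\sigma^{ij}_{k-1}+a\,\sigma^{ij}_{k-2}\big)\Big\},$$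 and set $S_1=Q_1+y\,G$, $S_2=Q_2+y\,Q_1+\frac{y^2}{2}G$. Then $\{H,P_y\}=\{H,S_1\}=\{H,S_2\}=0$ and each of the triples $(H,P_y,S_1)$, $(H,P_y,S_2)$ is functionally independent; thus $\{H,P_y,S_1\}$ and $\{H,P_y,S_2\}$ are two maximally superintegrable systems.
   Context: $\{\cdot,\cdot\}$ is the canonical Poisson bracket on $T^*M$, $(P_a,P_y)$ the momenta conjugate to $(a,y)$; $H$ is the geodesic Hamiltonian of $g=\dot x^2a^{-2}da^2+a^{-1}dy^2$. Symmetric functions of the roots: $\sigma_k$ ($0\le k\le n$) by $\prod_{i}(a-a_i)=\sum_{k=0}^n(-1)^k\sigma_k a^{n-k}$; for each $i$, $\sigma^i_m$ ($-1\le m\le n$) by $\prod_{l\neq i}(a-a_l)=\sum_{m=0}^{n-1}(-1)^m\sigma^i_m a^{n-1-m}$ with $\sigma^i_{-1}=\sigma^i_n=0$; for $i\neq j$, $\sigma^{ij}_m$ ($-2\le m\le n$) by $\prod_{l\neq i,j}(a-a_l)=\sum_{m=0}^{n-2}(-1)^m\sigma^{ij}_m a^{n-2-m}$ with $\sigma^{ij}_{-2}=\sigma^{ij}_{-1}=\sigma^{ij}_{n-1}=\sigma^{ij}_n=0$. *)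

theory Defs
  imports "HOL-Analysis.Analysis" "HOL-Computational_Algebra.Polynomial"
begin

text \<open>Points of the cotangent bundle T*M, M = I x R, with canonical coordinates
  (a, y, P_a, P_y).\<close>
type_synonym phase = "real \<times> real \<times> real \<times> real"

definition d_a :: "(phase \<Rightarrow> real) \<Rightarrow> phase \<Rightarrow> real" where
  "d_a f p = (case p of (a, y, pa, py) \<Rightarrow> deriv (\<lambda>t. f (t, y, pa, py)) a)"
definition d_y :: "(phase \<Rightarrow> real) \<Rightarrow> phase \<Rightarrow> real" where
  "d_y f p = (case p of (a, y, pa, py) \<Rightarrow> deriv (\<lambda>t. f (a, t, pa, py)) y)"
definition d_Pa :: "(phase \<Rightarrow> real) \<Rightarrow> phase \<Rightarrow> real" where
  "d_Pa f p = (case p of (a, y, pa, py) \<Rightarrow> deriv (\<lambda>t. f (a, y, t, py)) pa)"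
definition d_Py :: "(phase \<Rightarrow> real) \<Rightarrow> phase \<Rightarrow> real" where
  "d_Py f p = (case p of (a, y, pa, py) \<Rightarrow> deriv (\<lambda>t. f (a, y, pa, t)) py)"

definition poisson :: "(phase \<Rightarrow> real) \<Rightarrow> (phase \<Rightarrow> real) \<Rightarrow> phase \<Rightarrow> real" where
  "poisson f g p = d_a f p * d_Pa g p - d_Pa f p * d_a g p
                 + d_y f p * d_Py g p - d_Py f p * d_y g p"

definition grad :: "(phase \<Rightarrow> real) \<Rightarrow> phase \<Rightarrow> nat \<Rightarrow> real" where
  "grad f p k = (if k = 0 then d_a f p else if k = 1 then d_y f p
                 else if k = 2 then d_Pa f p else d_Py f p)"

definition lin_indep3 :: "(nat \<Rightarrow> real) \<Rightarrow> (nat \<Rightarrow> real) \<Rightarrow> (nat \<Rightarrow> real) \<Rightarrow> bool" where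
  "lin_indep3 u v w \<longleftrightarrow>
     (\<forall>c1 c2 c3. (\<forall>k<4. c1 * u k + c2 * v k + c3 * w k = 0) \<longrightarrow> c1 = 0 \<and> c2 = 0 \<and> c3 = 0)"

text \<open>Functional independence of three functions on a domain D: their differentials
  are linearly independent on a dense subset of D (open by continuity).\<close>
definition fun_indep3 :: "phase set \<Rightarrow> (phase \<Rightarrow> real) \<Rightarrow> (phase \<Rightarrow> real) \<Rightarrow> (phase \<Rightarrow> real) \<Rightarrow> bool" where
  "fun_indep3 D f g h \<longleftrightarrow>
     D \<subseteq> closure {p \<in> D. lin_indep3 (grad f p) (grad g p) (grad h p)}"

text \<open>Symmetric functions of the roots r l, l in S, defined as in the paper through
  prod_{l in S} (a - r l) = sum_{m=0}^{|S|} (-1)^m sigma_m a^{|S|-m},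
  extended by 0 for m < 0 or m > |S|.\<close>
definition root_poly :: "(nat \<Rightarrow> real) \<Rightarrow> nat set \<Rightarrow> real poly" where
  "root_poly r S = (\<Prod>l\<in>S. [:- r l, 1:])"

definition sym :: "(nat \<Rightarrow> real) \<Rightarrow> nat set \<Rightarrow> int \<Rightarrow> real" where
  "sym r S m = (if m < 0 \<or> m > int (card S) then 0
               else (-1) ^ nat m * coeff (root_poly r S) (card S - nat m))"

abbreviation sigma :: "nat \<Rightarrow> (nat \<Rightarrow> real) \<Rightarrow> int \<Rightarrow> real" where
  "sigma n r m \<equiv> sym r {1..n} m"
abbreviation sigma1 :: "nat \<Rightarrow> (nat \<Rightarrow> real) \<Rightarrow> nat \<Rightarrow> int \<Rightarrow> real" where
  "sigma1 n r i m \<equiv> sym r ({1..n} - {i}) m"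
abbreviation sigma2 :: "nat \<Rightarrow> (nat \<Rightarrow> real) \<Rightarrow> nat \<Rightarrow> nat \<Rightarrow> int \<Rightarrow> real" where
  "sigma2 n r i j m \<equiv> sym r ({1..n} - {i, j}) m"

definition Acoef :: "nat \<Rightarrow> (nat \<Rightarrow> real) \<Rightarrow> nat \<Rightarrow> real" where
  "Acoef n r k = coeff (root_poly r {1..n}) k"

definition Delta :: "(nat \<Rightarrow> real) \<Rightarrow> (nat \<Rightarrow> real) \<Rightarrow> nat \<Rightarrow> real \<Rightarrow> real" where
  "Delta eps r i a = eps i * (a - r i)"

definition xfun :: "nat \<Rightarrow> (nat \<Rightarrow> real) \<Rightarrow> (nat \<Rightarrow> real) \<Rightarrow> (nat \<Rightarrow> real) \<Rightarrow> real \<Rightarrow> real \<Rightarrow> real" where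
  "xfun n r eps xi nu a = nu / 2 * a + (\<Sum>i=1..n. xi i / sqrt (Delta eps r i a))"

definition xdot :: "nat \<Rightarrow> (nat \<Rightarrow> real) \<Rightarrow> (nat \<Rightarrow> real) \<Rightarrow> (nat \<Rightarrow> real) \<Rightarrow> real \<Rightarrow> real \<Rightarrow> real" where
  "xdot n r eps xi nu a = deriv (xfun n r eps xi nu) a"

definition PiF :: "nat \<Rightarrow> (nat \<Rightarrow> real) \<Rightarrow> (nat \<Rightarrow> real) \<Rightarrow> (nat \<Rightarrow> real) \<Rightarrow> real \<Rightarrow> phase \<Rightarrow> real" where
  "PiF n r eps xi nu p = (case p of (a, y, pa, py) \<Rightarrow> a / xdot n r eps xi nu a * pa)"

definition Py :: "phase \<Rightarrow> real" where
  "Py p = (case p of (a, y, pa, py) \<Rightarrow> py)"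

definition HF :: "nat \<Rightarrow> (nat \<Rightarrow> real) \<Rightarrow> (nat \<Rightarrow> real) \<Rightarrow> (nat \<Rightarrow> real) \<Rightarrow> real \<Rightarrow> phase \<Rightarrow> real" where
  "HF n r eps xi nu p = (case p of (a, y, pa, py) \<Rightarrow> (PiF n r eps xi nu p)^2 + a * py^2)"

definition GF :: "nat \<Rightarrow> (nat \<Rightarrow> real) \<Rightarrow> (nat \<Rightarrow> real) \<Rightarrow> (nat \<Rightarrow> real) \<Rightarrow> real \<Rightarrow> phase \<Rightarrow> real" where
  "GF n r eps xi nu p =
     (\<Sum>k=0..n. Acoef n r (n - k) * (HF n r eps xi nu p)^(n - k) * (Py p)^(2*k+1))"

definition btil :: "nat \<Rightarrow> (nat \<Rightarrow> real) \<Rightarrow> (nat \<Rightarrow> real) \<Rightarrow> (nat \<Rightarrow> real) \<Rightarrow> real \<Rightarrow> nat \<Rightarrow> real \<Rightarrow> real" where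
  "btil n r eps xi nu k a = (-1)^k * (nu * sigma n r (int k)
      + (\<Sum>i=1..n. xi i / sqrt (Delta eps r i a) * sigma1 n r i (int k - 1)))"

definition ctil :: "nat \<Rightarrow> (nat \<Rightarrow> real) \<Rightarrow> (nat \<Rightarrow> real) \<Rightarrow> (nat \<Rightarrow> real) \<Rightarrow> real \<Rightarrow> nat \<Rightarrow> real \<Rightarrow> real" where
  "ctil n r eps xi nu k a = (-1)^(k+1) / 2 *
     ( nu^2 * a * sigma n r (int k)
     + 2 * nu * (\<Sum>i=1..n. xi i / sqrt (Delta eps r i a)
                    * (sigma1 n r i (int k) + a * sigma1 n r i (int k - 1)))
     + (\<Sum>i=1..n. (xi i)^2 / Delta eps r i a * sigma1 n r i (int k - 1))
     + (\<Sum>i=1..n. \<Sum>j\<in>{1..n} - {i}. xi i * xi j / sqrt (Delta eps r i a * Delta eps r j a)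
                    * (sigma2 n r i j (int k - 1) + a * sigma2 n r i j (int k - 2))))"

definition Q1F :: "nat \<Rightarrow> (nat \<Rightarrow> real) \<Rightarrow> (nat \<Rightarrow> real) \<Rightarrow> (nat \<Rightarrow> real) \<Rightarrow> real \<Rightarrow> phase \<Rightarrow> real" where
  "Q1F n r eps xi nu p = (case p of (a, y, pa, py) \<Rightarrow>
     (\<Sum>k=0..n. btil n r eps xi nu k a * (HF n r eps xi nu p)^(n - k)
                 * PiF n r eps xi nu p * py^(2*k)))"

definition Q2F :: "nat \<Rightarrow> (nat \<Rightarrow> real) \<Rightarrow> (nat \<Rightarrow> real) \<Rightarrow> (nat \<Rightarrow> real) \<Rightarrow> real \<Rightarrow> phase \<Rightarrow> real" where
  "Q2F n r eps xi nu p = (case p of (a, y, pa, py) \<Rightarrow>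
     (\<Sum>k=0..n. ctil n r eps xi nu k a * (HF n r eps xi nu p)^(n - k) * py^(2*k+1)))"

definition S1F :: "nat \<Rightarrow> (nat \<Rightarrow> real) \<Rightarrow> (nat \<Rightarrow> real) \<Rightarrow> (nat \<Rightarrow> real) \<Rightarrow> real \<Rightarrow> phase \<Rightarrow> real" where
  "S1F n r eps xi nu p = (case p of (a, y, pa, py) \<Rightarrow>
     Q1F n r eps xi nu p + y * GF n r eps xi nu p)"

definition S2F :: "nat \<Rightarrow> (nat \<Rightarrow> real) \<Rightarrow> (nat \<Rightarrow> real) \<Rightarrow> (nat \<Rightarrow> real) \<Rightarrow> real \<Rightarrow> phase \<Rightarrow> real" where
  "S2F n r eps xi nu p = (case p of (a, y, pa, py) \<Rightarrow>
     Q2F n r eps xi nu p + y * Q1F n r eps xi nu p + y^2 / 2 * GF n r eps xi nu p)"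

end

theory Submission
  imports Defs
begin

lemma root_poly_insert: "finite S \<Longrightarrow> x \<notin> S \<Longrightarrow> root_poly r (insert x S) = [:- r x, 1:] * root_poly r S"
  by (simp add: root_poly_def)

lemma degree_root_poly_le: "finite S \<Longrightarrow> degree (root_poly r S) \<le> card S"
proof -
  assume "finite S"
  hence "degree (root_poly r S) \<le> sum (degree \<circ> (\<lambda>l. [:- r l, 1:])) S"
    unfolding root_poly_def by (rule degree_prod_sum_le)
  also have "\<dots> = card S" by simp
  finally show ?thesis .
qed

lemma coeff_root_poly_big: "finite S \<Longrightarrow> j > card S \<Longrightarrow> coeff (root_poly r S) j = 0"
  using degree_root_poly_le[of S r] by (intro coeff_eq_0) auto

lemma hom_prod:
  assumes "finite S"
  shows "(\<Prod>l\<in>S. h - r l * q) = (\<Sum>j\<le>card S. coeff (root_poly r S) j * h^j * q^(card S - j))"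
  using assms
proof (induction S rule: finite_induct)
  case empty
  then show ?case by (simp add: root_poly_def)
next
  case (insert x S)
  let ?c = "root_poly r S"
  let ?m = "card S"
  have rp: "root_poly r (insert x S) = smult (- r x) ?c + pCons 0 ?c"
    using insert by (simp add: root_poly_insert mult_pCons_left)
  have "(\<Sum>j\<le>Suc ?m. coeff (root_poly r (insert x S)) j * h^j * q^(Suc ?m - j))
      = (\<Sum>j\<le>Suc ?m. (- r x) * coeff ?c j * h^j * q^(Suc ?m - j))
        + (\<Sum>j\<le>Suc ?m. coeff (pCons 0 ?c) j * h^j * q^(Suc ?m - j))"
    unfolding rp coeff_add coeff_smult sum.distrib[symmetric] by (rule sum.cong) (simp_all add: algebra_simps)
  also have "(\<Sum>j\<le>Suc ?m. (- r x) * coeff ?c j * h^j * q^(Suc ?m - j))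
      = (- r x * q) * (\<Sum>j\<le>?m. coeff ?c j * h^j * q^(?m - j))"
    using coeff_root_poly_big[OF insert(1), of "Suc ?m" r]
    by (simp add: sum_distrib_left Suc_diff_le algebra_simps)
  also have "(\<Sum>j\<le>Suc ?m. coeff (pCons 0 ?c) j * h^j * q^(Suc ?m - j))
      = h * (\<Sum>j\<le>?m. coeff ?c j * h^j * q^(?m - j))"
    by (simp add: sum.atMost_Suc_shift sum_distrib_left algebra_simps del: sum.atMost_Suc)
  finally show ?case using insert
    by (simp add: algebra_simps)
qed

lemma sym_sum:
  assumes S: "finite S" and le: "card S + d \<le> n"
  shows "(\<Sum>k=0..n. (-1)^k * sym r S (int k - int d) * h^(n-k) * q^k)
        = (-1)^d * q^d * h^(n - card S - d) * (\<Prod>l\<in>S. h - r l * q)"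
proof -
  let ?m = "card S"
  let ?f = "\<lambda>k. (-1)^k * sym r S (int k - int d) * h^(n-k) * (q::real)^k"
  have "(\<Sum>k=0..n. ?f k) = (\<Sum>k=d..d+?m. ?f k)"
    using le by (intro sum.mono_neutral_right) (auto simp: sym_def)
  also have "\<dots> = (\<Sum>j=0..?m. ?f (j+d))"
    using sum.shift_bounds_cl_nat_ivl[of ?f 0 d ?m] by (simp add: add.commute)
  also have "\<dots> = (\<Sum>j=0..?m. ((-1)^d * q^d * h^(n - ?m - d)) * (coeff (root_poly r S) (?m - j) * h^(?m-j) * q^j))"
  proof (rule sum.cong)
    fix j assume j: "j \<in> {0..?m}"
    have e1: "int (j+d) - int d = int j" by simp
    have e2: "h^(n - (j+d)) = h^(n - ?m - d) * h^(?m - j)"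
    proof -
      have "n - (j+d) = (n - ?m - d) + (?m - j)" using j le by simp
      thus ?thesis by (simp only: power_add)
    qed
    have e4: "(-1::real)^j * (-1)^j = 1"
      by (simp add: power_mult_distrib[symmetric])
    have e3: "(-1::real)^(j+d) * (-1)^j = (-1)^d"
    proof -
      have "(-1::real)^(j+d) * (-1)^j = (-1)^d * ((-1)^j * (-1)^j)" unfolding power_add by (simp only: mult_ac)
      thus ?thesis unfolding e4 by simp
    qed
    have "?f (j+d) = ((-1)^(j+d) * (-1)^j) * coeff (root_poly r S) (?m - j) * h^(n - (j+d)) * q^(j+d)"
      using j unfolding e1 by (simp add: sym_def)
    also have "\<dots> = ((-1)^d * q^d * h^(n - ?m - d)) * (coeff (root_poly r S) (?m - j) * h^(?m-j) * q^j)"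
      unfolding e2 e3 by (simp add: power_add algebra_simps)
    finally show "?f (j+d) = ((-1)^d * q^d * h^(n - ?m - d)) * (coeff (root_poly r S) (?m - j) * h^(?m-j) * q^j)" .
  qed simp
  also have "\<dots> = ((-1)^d * q^d * h^(n - ?m - d)) * (\<Sum>j=0..?m. coeff (root_poly r S) (?m - j) * h^(?m-j) * q^j)"
    by (simp add: sum_distrib_left)
  also have "(\<Sum>j=0..?m. coeff (root_poly r S) (?m - j) * h^(?m-j) * q^j) = (\<Sum>j=0..?m. coeff (root_poly r S) j * h^j * q^(?m-j))"
    by (subst sum.atLeastAtMost_rev) (auto intro!: sum.cong)
  also have "\<dots> = (\<Prod>l\<in>S. h - r l * q)"
    using hom_prod[OF S, of h r q] by (simp add: atLeast0AtMost)
  finally show ?thesis .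
qed

definition PP :: "(nat\<Rightarrow>real) \<Rightarrow> nat set \<Rightarrow> real \<Rightarrow> real \<Rightarrow> real" where
  "PP r S h q = (\<Prod>l\<in>S. h - r l * q)"

lemma card_N1: "i \<in> {1..n} \<Longrightarrow> card ({1..n} - {i}) = n - 1"
  by simp
lemma card_N2: "i \<in> {1..n} \<Longrightarrow> j \<in> {1..n} \<Longrightarrow> j \<noteq> i \<Longrightarrow> card ({1..n} - {i,j}) = n - 2"
  by (simp add: card_Diff_subset)

lemma T0: "(\<Sum>k=0..n. (-1)^k * sigma n r (int k) * h^(n-k) * q^k) = PP r {1..n} h q"
proof -
  have "(\<Sum>k=0..n. (-1)^k * sym r {1..n} (int k - int 0) * h^(n-k) * q^k) = (-1)^0 * q^0 * h^(n - card {1..n} - 0) * (\<Prod>l\<in>{1..n}. h - r l * q)"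
    by (rule sym_sum) auto
  also have "\<dots> = PP r {1..n} h q" by (simp add: PP_def)
  finally show ?thesis by (simp only: of_nat_0 diff_0_right)
qed
lemma T1: assumes "i \<in> {1..n}"
  shows "(\<Sum>k=0..n. (-1)^k * sigma1 n r i (int k) * h^(n-k) * q^k) = h * PP r ({1..n}-{i}) h q"
proof -
  have c: "card ({1..n}-{i}) = n - 1" by (rule card_N1[OF assms])
  have a: "card ({1..n}-{i}) + 0 \<le> n" "n - card ({1..n}-{i}) - 0 = 1" unfolding c using assms by auto
  have "(\<Sum>k=0..n. (-1)^k * sym r ({1..n}-{i}) (int k - int 0) * h^(n-k) * q^k) = (-1)^0 * q^0 * h^(n - card ({1..n}-{i}) - 0) * (\<Prod>l\<in>{1..n}-{i}. h - r l * q)"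
    by (rule sym_sum) (use a in auto)
  also have "\<dots> = h * PP r ({1..n}-{i}) h q" unfolding a(2) PP_def by simp
  finally show ?thesis by (simp only: of_nat_0 diff_0_right)
qed
lemma T2: assumes "i \<in> {1..n}"
  shows "(\<Sum>k=0..n. (-1)^k * sigma1 n r i (int k - 1) * h^(n-k) * q^k) = - q * PP r ({1..n}-{i}) h q"
proof -
  have c: "card ({1..n}-{i}) = n - 1" by (rule card_N1[OF assms])
  have a: "card ({1..n}-{i}) + 1 \<le> n" "n - card ({1..n}-{i}) - 1 = 0" unfolding c using assms by auto
  have "(\<Sum>k=0..n. (-1)^k * sym r ({1..n}-{i}) (int k - 1) * h^(n-k) * q^k) = (-1)^1 * q^1 * h^(n - card ({1..n}-{i}) - 1) * (\<Prod>l\<in>{1..n}-{i}. h - r l * q)"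
    by (rule sym_sum[of _ 1, unfolded of_nat_1]) (use a in auto)
  also have "\<dots> = - q * PP r ({1..n}-{i}) h q" unfolding a(2) PP_def by simp
  finally show ?thesis .
qed
lemma T3: assumes "i \<in> {1..n}" "j \<in> {1..n}" "j \<noteq> i"
  shows "(\<Sum>k=0..n. (-1)^k * sigma2 n r i j (int k - 1) * h^(n-k) * q^k) = - q * h * PP r ({1..n}-{i,j}) h q"
proof -
  have c: "card ({1..n}-{i,j}) = n - 2" by (rule card_N2[OF assms])
  have "n \<ge> 2" using assms by auto
  hence a: "card ({1..n}-{i,j}) + 1 \<le> n" "n - card ({1..n}-{i,j}) - 1 = 1" unfolding c by auto
  have "(\<Sum>k=0..n. (-1)^k * sym r ({1..n}-{i,j}) (int k - 1) * h^(n-k) * q^k) = (-1)^1 * q^1 * h^(n - card ({1..n}-{i,j}) - 1) * (\<Prod>l\<in>{1..n}-{i,j}. h - r l * q)"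
    by (rule sym_sum[of _ 1, unfolded of_nat_1]) (use a in auto)
  also have "\<dots> = - q * h * PP r ({1..n}-{i,j}) h q" unfolding a(2) PP_def by simp
  finally show ?thesis .
qed
lemma T4: assumes "i \<in> {1..n}" "j \<in> {1..n}" "j \<noteq> i"
  shows "(\<Sum>k=0..n. (-1)^k * sigma2 n r i j (int k - 2) * h^(n-k) * q^k) = q^2 * PP r ({1..n}-{i,j}) h q"
proof -
  have c: "card ({1..n}-{i,j}) = n - 2" by (rule card_N2[OF assms])
  have "n \<ge> 2" using assms by auto
  hence a: "card ({1..n}-{i,j}) + 2 \<le> n" "n - card ({1..n}-{i,j}) - 2 = 0" unfolding c by auto
  have e: "int 2 = 2" by simp
  have "(\<Sum>k=0..n. (-1)^k * sym r ({1..n}-{i,j}) (int k - 2) * h^(n-k) * q^k) = (-1)^2 * q^2 * h^(n - card ({1..n}-{i,j}) - 2) * (\<Prod>l\<in>{1..n}-{i,j}. h - r l * q)"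
    by (rule sym_sum[of _ 2, unfolded e]) (use a in auto)
  also have "\<dots> = q^2 * PP r ({1..n}-{i,j}) h q" unfolding a(2) PP_def by simp
  finally show ?thesis .
qed

lemma Bsum_closed:
  "(\<Sum>k=0..n. btil n r eps xi nu k t * h^(n-k) * q^k)
   = nu * PP r {1..n} h q - q * (\<Sum>i\<in>{1..n}. xi i / sqrt (Delta eps r i t) * PP r ({1..n}-{i}) h q)"
proof -
  have "(\<Sum>k=0..n. btil n r eps xi nu k t * h^(n-k) * q^k)
     = (\<Sum>k=0..n. nu * ((-1)^k * sigma n r (int k) * h^(n-k) * q^k)
         + (\<Sum>i\<in>{1..n}. xi i / sqrt (Delta eps r i t) * ((-1)^k * sigma1 n r i (int k - 1) * h^(n-k) * q^k)))"
    unfolding btil_def by (intro sum.cong refl) (simp add: algebra_simps sum_distrib_left sum_distrib_right)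
  also have "\<dots> = nu * (\<Sum>k=0..n. (-1)^k * sigma n r (int k) * h^(n-k) * q^k)
      + (\<Sum>i\<in>{1..n}. xi i / sqrt (Delta eps r i t) * (\<Sum>k=0..n. (-1)^k * sigma1 n r i (int k - 1) * h^(n-k) * q^k))"
    by (simp only: sum.distrib sum_distrib_left sum.swap[of _ "{0..n}"])
  also have "\<dots> = nu * PP r {1..n} h q + (\<Sum>i\<in>{1..n}. xi i / sqrt (Delta eps r i t) * (- q * PP r ({1..n}-{i}) h q))"
  proof -
    have "\<And>i. i \<in> {1..n} \<Longrightarrow> xi i / sqrt (Delta eps r i t) * (\<Sum>k=0..n. (-1)^k * sigma1 n r i (int k - 1) * h^(n-k) * q^k)
       = xi i / sqrt (Delta eps r i t) * (- q * PP r ({1..n}-{i}) h q)"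
      by (simp only: T2)
    thus ?thesis unfolding T0 by (simp only: cong: sum.cong)
  qed
  finally show ?thesis by (simp add: sum_distrib_left algebra_simps sum_negf)
qed

lemma ctil_expand:
  fixes n k :: nat and r eps xi :: "nat \<Rightarrow> real" and nu t h q :: real
  defines "N \<equiv> {1..n}"
  defines "u \<equiv> \<lambda>i. xi i / sqrt (Delta eps r i t)"
  defines "w \<equiv> \<lambda>i. (xi i)^2 / Delta eps r i t"
  defines "v \<equiv> \<lambda>i j. xi i * xi j / sqrt (Delta eps r i t * Delta eps r j t)"
  defines "E \<equiv> (-1)^k * h^(n-k) * q^k"
  shows "ctil n r eps xi nu k t * h^(n-k) * q^k
     = - (nu^2/2) * t * (sigma n r (int k) * E)
         - nu * (\<Sum>i\<in>N. u i * ((sigma1 n r i (int k) * E) + t * (sigma1 n r i (int k - 1) * E)))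
         - 1/2 * (\<Sum>i\<in>N. w i * (sigma1 n r i (int k - 1) * E))
         - 1/2 * (\<Sum>i\<in>N. \<Sum>j\<in>N-{i}. v i j * ((sigma2 n r i j (int k - 1) * E) + t * (sigma2 n r i j (int k - 2) * E)))"
proof -
  have a: "(\<Sum>i\<in>N. u i * ((sigma1 n r i (int k) * E) + t * (sigma1 n r i (int k - 1) * E)))
     = (\<Sum>i\<in>N. u i * (sigma1 n r i (int k) + t * sigma1 n r i (int k - 1))) * E"
    by (simp add: sum_distrib_left sum_distrib_right sum.distrib algebra_simps)
  have b: "(\<Sum>i\<in>N. w i * (sigma1 n r i (int k - 1) * E)) = (\<Sum>i\<in>N. w i * sigma1 n r i (int k - 1)) * E"
    by (simp add: sum_distrib_left sum_distrib_right sum.distrib algebra_simps)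
  have c: "(\<Sum>i\<in>N. \<Sum>j\<in>N-{i}. v i j * ((sigma2 n r i j (int k - 1) * E) + t * (sigma2 n r i j (int k - 2) * E)))
     = (\<Sum>i\<in>N. \<Sum>j\<in>N-{i}. v i j * (sigma2 n r i j (int k - 1) + t * sigma2 n r i j (int k - 2))) * E"
    by (simp add: sum_distrib_left sum_distrib_right sum.distrib algebra_simps)
  have ctil: "ctil n r eps xi nu k t = (-1)^(k+1) / 2 *
     ( nu^2 * t * sigma n r (int k)
     + 2 * nu * (\<Sum>i\<in>N. u i * (sigma1 n r i (int k) + t * sigma1 n r i (int k - 1)))
     + (\<Sum>i\<in>N. w i * sigma1 n r i (int k - 1))
     + (\<Sum>i\<in>N. \<Sum>j\<in>N-{i}. v i j * (sigma2 n r i j (int k - 1) + t * sigma2 n r i j (int k - 2))))"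
    unfolding ctil_def N_def u_def w_def v_def ..
  have key: "\<And>X. (-1)^(k+1) / 2 * X * h^(n-k) * q^k = - (X * E) / 2" by (simp add: E_def algebra_simps)
  show ?thesis unfolding a b c ctil key by (simp add: field_simps)
qed

lemma gsum4: "(\<Sum>k\<in>K. c0 * a k - c1 * b k - c2 * c k - c3 * d k)
  = c0 * (\<Sum>k\<in>K. a k) - c1 * (\<Sum>k\<in>K. b k) - c2 * (\<Sum>k\<in>K. c k) - c3 * (\<Sum>k\<in>K. d k)" for c0 c1 c2 c3 :: real
  by (simp add: sum_subtractf sum_distrib_left)
lemma gswap0: "(\<Sum>k\<in>K. \<Sum>i\<in>I. w i * c i k) = (\<Sum>i\<in>I. w i * (\<Sum>k\<in>K. c i k))" for w :: "_ \<Rightarrow> real"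
  by (subst sum.swap) (simp add: sum_distrib_left)
lemma gswap1: "(\<Sum>k\<in>K. \<Sum>i\<in>I. u i * (a i k + t * b i k)) = (\<Sum>i\<in>I. u i * ((\<Sum>k\<in>K. a i k) + t * (\<Sum>k\<in>K. b i k)))" for u :: "_ \<Rightarrow> real"
  by (subst sum.swap) (simp add: sum_distrib_left sum.distrib distrib_left)
lemma gswap2: "(\<Sum>k\<in>K. \<Sum>i\<in>I. \<Sum>j\<in>J i. v i j * (a i j k + t * b i j k))
   = (\<Sum>i\<in>I. \<Sum>j\<in>J i. v i j * ((\<Sum>k\<in>K. a i j k) + t * (\<Sum>k\<in>K. b i j k)))" for v :: "_ \<Rightarrow> _ \<Rightarrow> real"
proof -
  have "(\<Sum>k\<in>K. \<Sum>i\<in>I. \<Sum>j\<in>J i. v i j * (a i j k + t * b i j k)) = (\<Sum>i\<in>I. \<Sum>k\<in>K. \<Sum>j\<in>J i. v i j * (a i j k + t * b i j k))"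
    by (rule sum.swap)
  also have "\<dots> = (\<Sum>i\<in>I. \<Sum>j\<in>J i. \<Sum>k\<in>K. v i j * (a i j k + t * b i j k))"
    by (rule sum.cong[OF refl], rule sum.swap)
  finally show ?thesis by (simp add: sum_distrib_left sum.distrib distrib_left)
qed

lemma Csum_closed:
  fixes n :: nat and r eps xi :: "nat \<Rightarrow> real" and nu t h q :: real
  defines "N \<equiv> {1..n}"
  defines "u \<equiv> \<lambda>i. xi i / sqrt (Delta eps r i t)"
  defines "w \<equiv> \<lambda>i. (xi i)^2 / Delta eps r i t"
  defines "v \<equiv> \<lambda>i j. xi i * xi j / sqrt (Delta eps r i t * Delta eps r j t)"
  shows "(\<Sum>k=0..n. ctil n r eps xi nu k t * h^(n-k) * q^k)
   = - (nu^2/2) * t * PP r N h q - nu * (\<Sum>i\<in>N. u i * (h - t*q) * PP r (N-{i}) h q)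
     + q/2 * (\<Sum>i\<in>N. w i * PP r (N-{i}) h q)
     + q/2 * (\<Sum>i\<in>N. \<Sum>j\<in>N-{i}. v i j * (h - t*q) * PP r (N-{i,j}) h q)"
proof -
  let ?E = "\<lambda>k. (-1::real)^k * h^(n-k) * q^k"
  have e: "\<And>k f. f * ?E k = (-1)^k * f * h^(n-k) * q^k" by (simp add: algebra_simps)
  have "(\<Sum>k=0..n. ctil n r eps xi nu k t * h^(n-k) * q^k)
     = (\<Sum>k=0..n. - (nu^2/2) * t * (sigma n r (int k) * ?E k)
         - nu * (\<Sum>i\<in>N. u i * ((sigma1 n r i (int k) * ?E k) + t * (sigma1 n r i (int k - 1) * ?E k)))
         - 1/2 * (\<Sum>i\<in>N. w i * (sigma1 n r i (int k - 1) * ?E k))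
         - 1/2 * (\<Sum>i\<in>N. \<Sum>j\<in>N-{i}. v i j * ((sigma2 n r i j (int k - 1) * ?E k) + t * (sigma2 n r i j (int k - 2) * ?E k))))"
    unfolding N_def u_def w_def v_def by (intro sum.cong refl ctil_expand)
  also have "\<dots> = - (nu^2/2) * t * (\<Sum>k=0..n. sigma n r (int k) * ?E k)
         - nu * (\<Sum>i\<in>N. u i * ((\<Sum>k=0..n. sigma1 n r i (int k) * ?E k) + t * (\<Sum>k=0..n. sigma1 n r i (int k - 1) * ?E k)))
         - 1/2 * (\<Sum>i\<in>N. w i * (\<Sum>k=0..n. sigma1 n r i (int k - 1) * ?E k))
         - 1/2 * (\<Sum>i\<in>N. \<Sum>j\<in>N-{i}. v i j * ((\<Sum>k=0..n. sigma2 n r i j (int k - 1) * ?E k) + t * (\<Sum>k=0..n. sigma2 n r i j (int k - 2) * ?E k)))"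
    apply (subst gsum4)
    apply (subst gswap2)
    apply (subst gswap1)
    apply (subst gswap0)
    apply (simp only: sum_distrib_left)
    done
  also have "\<dots> = - (nu^2/2) * t * PP r N h q
         - nu * (\<Sum>i\<in>N. u i * (h * PP r (N-{i}) h q + t * (- q * PP r (N-{i}) h q)))
         - 1/2 * (\<Sum>i\<in>N. w i * (- q * PP r (N-{i}) h q))
         - 1/2 * (\<Sum>i\<in>N. \<Sum>j\<in>N-{i}. v i j * (- q * h * PP r (N-{i,j}) h q + t * (q^2 * PP r (N-{i,j}) h q)))"
  proof -
    have t0: "(\<Sum>k=0..n. sigma n r (int k) * ?E k) = PP r N h q" unfolding e N_def by (rule T0)
    have t1: "\<And>i. i \<in> N \<Longrightarrow> (\<Sum>k=0..n. sigma1 n r i (int k) * ?E k) = h * PP r (N-{i}) h q"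
      unfolding e N_def by (rule T1)
    have t2: "\<And>i. i \<in> N \<Longrightarrow> (\<Sum>k=0..n. sigma1 n r i (int k - 1) * ?E k) = - q * PP r (N-{i}) h q"
      unfolding e N_def by (rule T2)
    have t3: "\<And>i j. i \<in> N \<Longrightarrow> j \<in> N-{i} \<Longrightarrow> (\<Sum>k=0..n. sigma2 n r i j (int k - 1) * ?E k) = - q * h * PP r (N-{i,j}) h q"
      unfolding e N_def by (rule T3) auto
    have t4: "\<And>i j. i \<in> N \<Longrightarrow> j \<in> N-{i} \<Longrightarrow> (\<Sum>k=0..n. sigma2 n r i j (int k - 2) * ?E k) = q^2 * PP r (N-{i,j}) h q"
      unfolding e N_def by (rule T4) auto
    have s1: "(\<Sum>i\<in>N. u i * ((\<Sum>k=0..n. sigma1 n r i (int k) * ?E k) + t * (\<Sum>k=0..n. sigma1 n r i (int k - 1) * ?E k)))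
       = (\<Sum>i\<in>N. u i * (h * PP r (N-{i}) h q + t * (- q * PP r (N-{i}) h q)))"
      by (rule sum.cong[OF refl]) (simp only: t1 t2)
    have s2: "(\<Sum>i\<in>N. w i * (\<Sum>k=0..n. sigma1 n r i (int k - 1) * ?E k)) = (\<Sum>i\<in>N. w i * (- q * PP r (N-{i}) h q))"
      by (rule sum.cong[OF refl]) (simp only: t2)
    have s3: "(\<Sum>i\<in>N. \<Sum>j\<in>N-{i}. v i j * ((\<Sum>k=0..n. sigma2 n r i j (int k - 1) * ?E k) + t * (\<Sum>k=0..n. sigma2 n r i j (int k - 2) * ?E k)))
       = (\<Sum>i\<in>N. \<Sum>j\<in>N-{i}. v i j * (- q * h * PP r (N-{i,j}) h q + t * (q^2 * PP r (N-{i,j}) h q)))"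
      by (rule sum.cong[OF refl], rule sum.cong[OF refl]) (simp only: t3 t4)
    show ?thesis unfolding t0 s1 s2 s3 ..
  qed
  also have "\<dots> = - (nu^2/2) * t * PP r N h q - nu * (\<Sum>i\<in>N. u i * (h - t*q) * PP r (N-{i}) h q)
     + q/2 * (\<Sum>i\<in>N. w i * PP r (N-{i}) h q)
     + q/2 * (\<Sum>i\<in>N. \<Sum>j\<in>N-{i}. v i j * (h - t*q) * PP r (N-{i,j}) h q)"
  proof -
    have r1: "(\<Sum>i\<in>N. u i * (h * PP r (N-{i}) h q + t * (- q * PP r (N-{i}) h q))) = (\<Sum>i\<in>N. u i * (h - t*q) * PP r (N-{i}) h q)"
      by (rule sum.cong) (simp_all add: algebra_simps)
    have r2: "(\<Sum>i\<in>N. w i * (- q * PP r (N-{i}) h q)) = - q * (\<Sum>i\<in>N. w i * PP r (N-{i}) h q)"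
      by (simp add: sum_distrib_left algebra_simps)
    have r3: "(\<Sum>i\<in>N. \<Sum>j\<in>N-{i}. v i j * (- q * h * PP r (N-{i,j}) h q + t * (q^2 * PP r (N-{i,j}) h q)))
       = - q * (\<Sum>i\<in>N. \<Sum>j\<in>N-{i}. v i j * (h - t*q) * PP r (N-{i,j}) h q)"
      by (simp add: sum_distrib_left algebra_simps power2_eq_square)
    show ?thesis unfolding r1 r2 r3 by (simp add: field_simps)
  qed
  finally show ?thesis .
qed

definition ud :: "(nat\<Rightarrow>real) \<Rightarrow> (nat\<Rightarrow>real) \<Rightarrow> (nat\<Rightarrow>real) \<Rightarrow> nat \<Rightarrow> real \<Rightarrow> real" where
  "ud eps r xi i a = - xi i * eps i / (2 * Delta eps r i a * sqrt (Delta eps r i a))"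

lemma Delta_deriv: "((\<lambda>t. Delta eps r i t) has_real_derivative eps i) (at a)"
  unfolding Delta_def by (auto intro!: derivative_eq_intros)

lemma u_deriv:
  assumes "Delta eps r i a > 0"
  shows "((\<lambda>t. xi i / sqrt (Delta eps r i t)) has_real_derivative ud eps r xi i a) (at a)"
proof -
  have "((\<lambda>t. xi i / sqrt (Delta eps r i t)) has_real_derivative
      (- (xi i * (inverse (sqrt (Delta eps r i a)) / 2 * eps i)) / (sqrt (Delta eps r i a) * sqrt (Delta eps r i a)))) (at a)"
    using assms by (auto intro!: derivative_eq_intros Delta_deriv DERIV_real_sqrt[THEN DERIV_chain2])
  moreover have "(- (xi i * (inverse (sqrt (Delta eps r i a)) / 2 * eps i)) / (sqrt (Delta eps r i a) * sqrt (Delta eps r i a)))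
     = ud eps r xi i a"
    using assms unfolding ud_def by (simp add: field_simps)
  ultimately show ?thesis by simp
qed

lemma aux_ud: fixes D x e :: real assumes "D > 0" "e*e = 1"
  shows "- x * e / (2 * D * sqrt D) * (e*D) = -(x/sqrt D)/2"
proof -
  have "- x * e / (2 * D * sqrt D) * (e*D) = - x * (e*e) * D / (2 * D * sqrt D)" by simp
  also have "\<dots> = -(x/sqrt D)/2" using assms by simp
  finally show ?thesis .
qed

lemma ud_rel:
  assumes "Delta eps r i a > 0" "eps i = 1 \<or> eps i = -1"
  shows "ud eps r xi i a * (a - r i) = - (xi i / sqrt (Delta eps r i a)) / 2"
proof -
  have "a - r i = eps i * Delta eps r i a" using assms(2) unfolding Delta_def by auto
  moreover have "eps i * eps i = 1" using assms(2) by auto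
  ultimately show ?thesis using assms(1) aux_ud unfolding ud_def by simp
qed

definition uf :: "(nat\<Rightarrow>real) \<Rightarrow> (nat\<Rightarrow>real) \<Rightarrow> (nat\<Rightarrow>real) \<Rightarrow> nat \<Rightarrow> real \<Rightarrow> real" where
  "uf eps r xi i t = xi i / sqrt (Delta eps r i t)"

definition cu where
  "cu n r eps xi nu k t = (-1)^(k+1) / 2 *
     ( nu^2 * t * sigma n r (int k)
     + 2 * nu * (\<Sum>i=1..n. uf eps r xi i t
                    * (sigma1 n r i (int k) + t * sigma1 n r i (int k - 1)))
     + (\<Sum>i=1..n. (uf eps r xi i t * uf eps r xi i t) * sigma1 n r i (int k - 1))
     + (\<Sum>i=1..n. \<Sum>j\<in>{1..n} - {i}. (uf eps r xi i t * uf eps r xi j t)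
                    * (sigma2 n r i j (int k - 1) + t * sigma2 n r i j (int k - 2))))"

lemma ctil_cu:
  assumes "\<forall>i\<in>{1..n}. Delta eps r i t > 0"
  shows "ctil n r eps xi nu k t = cu n r eps xi nu k t"
proof -
  have w: "\<And>i. i \<in> {1..n} \<Longrightarrow> (xi i)^2 / Delta eps r i t = uf eps r xi i t * uf eps r xi i t"
  proof -
    fix i assume "i \<in> {1..n}"
    hence "Delta eps r i t > 0" using assms by auto
    thus "(xi i)^2 / Delta eps r i t = uf eps r xi i t * uf eps r xi i t"
      unfolding uf_def by (simp add: power2_eq_square)
  qed
  have v: "\<And>i j. (xi i * xi j) / sqrt (Delta eps r i t * Delta eps r j t) = uf eps r xi i t * uf eps r xi j t"
    unfolding uf_def by (simp add: real_sqrt_mult)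
  have w2: "(\<Sum>i=1..n. (xi i)^2 / Delta eps r i t * sigma1 n r i (int k - 1))
     = (\<Sum>i=1..n. (uf eps r xi i t * uf eps r xi i t) * sigma1 n r i (int k - 1))"
    by (rule sum.cong[OF refl]) (simp only: w)
  show ?thesis unfolding ctil_def cu_def uf_def[symmetric] v w2 ..
qed

lemma uf_deriv: "Delta eps r i a > 0 \<Longrightarrow> (uf eps r xi i has_real_derivative ud eps r xi i a) (at a)"
  unfolding uf_def[abs_def] by (rule u_deriv)

lemma cu_diff:
  assumes "\<forall>i\<in>{1..n}. Delta eps r i a > 0"
  shows "\<exists>D. ((\<lambda>t. cu n r eps xi nu k t) has_real_derivative D) (at a)"
  unfolding cu_def
  apply (rule exI)
  apply (rule derivative_intros uf_deriv[THEN DERIV_cong] | use assms in simp)+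
  done

lemma sqrtD_deriv: "Delta eps r i a > 0 \<Longrightarrow>
  ((\<lambda>t. sqrt (Delta eps r i t)) has_real_derivative inverse (sqrt (Delta eps r i a)) / 2 * eps i) (at a)"
  by (rule DERIV_chain2[OF DERIV_real_sqrt Delta_deriv])

lemma xfun_deriv:
  assumes "\<forall>i\<in>{1..n}. Delta eps r i a > 0"
  shows "(xfun n r eps xi nu has_real_derivative nu/2 + (\<Sum>i=1..n. ud eps r xi i a)) (at a)"
proof -
  have "((\<lambda>t. nu / 2 * t + (\<Sum>i=1..n. xi i / sqrt (Delta eps r i t))) has_real_derivative nu/2 * 1 + (\<Sum>i=1..n. ud eps r xi i a)) (at a)"
    by (intro DERIV_add DERIV_sum u_deriv DERIV_cmult DERIV_ident) (use assms in auto)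
  thus ?thesis unfolding xfun_def[abs_def] by simp
qed

lemma xdot_eq:
  assumes "\<forall>i\<in>{1..n}. Delta eps r i a > 0"
  shows "xdot n r eps xi nu a = nu/2 + (\<Sum>i=1..n. ud eps r xi i a)"
  unfolding xdot_def using xfun_deriv[OF assms] by (rule DERIV_imp_deriv)

lemma ud_diff:
  assumes "Delta eps r i a > 0"
  shows "\<exists>D. ((\<lambda>t. ud eps r xi i t) has_real_derivative D) (at a)"
  unfolding ud_def
  apply (rule exI)
  apply (rule DERIV_divide DERIV_mult DERIV_const DERIV_cmult DERIV_minus sqrtD_deriv[OF assms] Delta_deriv)+
  using assms apply simp
  done

lemma xdot_diff:
  assumes "open I" "a \<in> I" "\<forall>t\<in>I. \<forall>i\<in>{1..n}. Delta eps r i t > 0"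
  shows "\<exists>D. (xdot n r eps xi nu has_real_derivative D) (at a)"
proof -
  have "\<forall>i\<in>{1..n}. \<exists>D. ((\<lambda>t. ud eps r xi i t) has_real_derivative D) (at a)"
    using assms ud_diff by blast
  then obtain D where D: "\<And>i. i \<in> {1..n} \<Longrightarrow> ((\<lambda>t. ud eps r xi i t) has_real_derivative D i) (at a)"
    by metis
  have "((\<lambda>t. nu/2 + (\<Sum>i=1..n. ud eps r xi i t)) has_real_derivative 0 + (\<Sum>i=1..n. D i)) (at a)"
    by (intro derivative_intros D)
  hence "(xdot n r eps xi nu has_real_derivative 0 + (\<Sum>i=1..n. D i)) (at a)"
    by (rule has_field_derivative_transform_within_open[OF _ assms(1,2)])
       (use assms(3) xdot_eq in auto)
  thus ?thesis by blast
qed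

definition psum :: "nat \<Rightarrow> (nat \<Rightarrow> real) \<Rightarrow> real \<Rightarrow> real \<Rightarrow> real" where
  "psum n c h q = (\<Sum>k=0..n. c k * h^(n-k) * q^k)"
definition psumh :: "nat \<Rightarrow> (nat \<Rightarrow> real) \<Rightarrow> real \<Rightarrow> real \<Rightarrow> real" where
  "psumh n c h q = (\<Sum>k=0..n. c k * (real (n-k) * h^(n-k-1)) * q^k)"

lemma psum_deriv:
  assumes "\<And>k. k \<in> {0..n} \<Longrightarrow> ((\<lambda>t. c k t) has_real_derivative c' k) (at a)"
    and "(H has_real_derivative H') (at a)"
  shows "((\<lambda>t. psum n (\<lambda>k. c k t) (H t) q) has_real_derivative
          psum n c' (H a) q + psumh n (\<lambda>k. c k a) (H a) q * H') (at a)"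
proof -
  have "((\<lambda>t. \<Sum>k=0..n. c k t * H t^(n-k) * q^k) has_real_derivative
      (\<Sum>k=0..n. (c' k * H a^(n-k) + c k a * (of_nat (n-k) * (H' * H a^(n - k - Suc 0)))) * q^k)) (at a)"
  proof (rule DERIV_sum)
    fix k assume k: "k \<in> {0..n}"
    have "((\<lambda>t. c k t * H t^(n-k)) has_real_derivative c' k * H a^(n-k) + (of_nat (n-k) * (H' * H a^(n - k - Suc 0))) * c k a) (at a)"
      by (rule DERIV_mult[OF assms(1)[OF k] DERIV_power[OF assms(2)]])
    hence "((\<lambda>t. c k t * H t^(n-k) * q^k) has_real_derivative (c' k * H a^(n-k) + (of_nat (n-k) * (H' * H a^(n - k - Suc 0))) * c k a) * q^k) (at a)"
      by (rule DERIV_cmult_right)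
    thus "((\<lambda>t. c k t * H t^(n-k) * q^k) has_real_derivative (c' k * H a^(n-k) + c k a * (of_nat (n-k) * (H' * H a^(n - k - Suc 0)))) * q^k) (at a)"
      by (simp add: algebra_simps)
  qed
  moreover have "(\<Sum>k=0..n. (c' k * H a^(n-k) + c k a * (of_nat (n-k) * (H' * H a^(n - k - Suc 0)))) * q^k)
     = psum n c' (H a) q + psumh n (\<lambda>k. c k a) (H a) q * H'"
    unfolding psum_def psumh_def sum_distrib_right sum.distrib[symmetric]
    by (rule sum.cong) (simp_all add: algebra_simps del: of_nat_diff)
  ultimately show ?thesis unfolding psum_def by simp
qed

lemma psum_deriv_const:
  assumes "(H has_real_derivative H') (at a)"
  shows "((\<lambda>t. psum n c (H t) q) has_real_derivative psumh n c (H a) q * H') (at a)"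
  using psum_deriv[of n "\<lambda>k t. c k" "\<lambda>k. 0" a H H' q] assms by (simp add: psum_def)

definition Ccl where
  "Ccl n r eps xi nu h q t = - (nu^2/2) * t * PP r {1..n} h q
     - nu * (\<Sum>i=1..n. uf eps r xi i t * (h - t*q) * PP r ({1..n}-{i}) h q)
     + q/2 * (\<Sum>i=1..n. (uf eps r xi i t * uf eps r xi i t) * PP r ({1..n}-{i}) h q)
     + q/2 * (\<Sum>i=1..n. \<Sum>j\<in>{1..n}-{i}. (uf eps r xi i t * uf eps r xi j t) * (h - t*q) * PP r ({1..n}-{i,j}) h q)"

definition DC where
  "DC n r eps xi nu h q a = - (nu^2/2) * PP r {1..n} h q
     - nu * (\<Sum>i=1..n. (ud eps r xi i a * (h - a*q) - uf eps r xi i a * q) * PP r ({1..n}-{i}) h q)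
     + q/2 * (\<Sum>i=1..n. (2 * uf eps r xi i a * ud eps r xi i a) * PP r ({1..n}-{i}) h q)
     + q/2 * (\<Sum>i=1..n. \<Sum>j\<in>{1..n}-{i}. ((ud eps r xi i a * uf eps r xi j a + uf eps r xi i a * ud eps r xi j a) * (h - a*q)
                 - uf eps r xi i a * uf eps r xi j a * q) * PP r ({1..n}-{i,j}) h q)"

lemma Ccl_deriv:
  assumes "\<forall>i\<in>{1..n}. Delta eps r i a > 0"
  shows "((\<lambda>t. Ccl n r eps xi nu h q t) has_real_derivative DC n r eps xi nu h q a) (at a)"
proof -
  let ?u = "\<lambda>i. uf eps r xi i" and ?d = "\<lambda>i. ud eps r xi i a"
  have t1: "((\<lambda>t. - (nu^2/2) * t * PP r {1..n} h q) has_real_derivative - (nu^2/2) * PP r {1..n} h q) (at a)"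
    by (rule derivative_eq_intros refl | simp)+
  have t2: "((\<lambda>t. (\<Sum>i=1..n. ?u i t * (h - t*q) * PP r ({1..n}-{i}) h q)) has_real_derivative
      (\<Sum>i=1..n. (?d i * (h - a*q) - ?u i a * q) * PP r ({1..n}-{i}) h q)) (at a)"
  proof (rule DERIV_sum)
    fix i assume i: "i \<in> {1..n}"
    hence D: "Delta eps r i a > 0" using assms by auto
    show "((\<lambda>t. ?u i t * (h - t*q) * PP r ({1..n}-{i}) h q) has_real_derivative (?d i * (h - a*q) - ?u i a * q) * PP r ({1..n}-{i}) h q) (at a)"
      by (rule derivative_eq_intros uf_deriv[OF D] refl | simp add: algebra_simps)+
  qed
  have t3: "((\<lambda>t. (\<Sum>i=1..n. (?u i t * ?u i t) * PP r ({1..n}-{i}) h q)) has_real_derivative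
      (\<Sum>i=1..n. (2 * ?u i a * ?d i) * PP r ({1..n}-{i}) h q)) (at a)"
  proof (rule DERIV_sum)
    fix i assume i: "i \<in> {1..n}"
    hence D: "Delta eps r i a > 0" using assms by auto
    show "((\<lambda>t. (?u i t * ?u i t) * PP r ({1..n}-{i}) h q) has_real_derivative (2 * ?u i a * ?d i) * PP r ({1..n}-{i}) h q) (at a)"
      by (rule derivative_eq_intros uf_deriv[OF D] refl | simp add: algebra_simps)+
  qed
  have t4: "((\<lambda>t. (\<Sum>i=1..n. \<Sum>j\<in>{1..n}-{i}. (?u i t * ?u j t) * (h - t*q) * PP r ({1..n}-{i,j}) h q)) has_real_derivative
      (\<Sum>i=1..n. \<Sum>j\<in>{1..n}-{i}. ((?d i * ?u j a + ?u i a * ?d j) * (h - a*q) - ?u i a * ?u j a * q) * PP r ({1..n}-{i,j}) h q)) (at a)"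
  proof (rule DERIV_sum, rule DERIV_sum)
    fix i j assume i: "i \<in> {1..n}" and j: "j \<in> {1..n}-{i}"
    hence Di: "Delta eps r i a > 0" and Dj: "Delta eps r j a > 0" using assms by auto
    show "((\<lambda>t. (?u i t * ?u j t) * (h - t*q) * PP r ({1..n}-{i,j}) h q) has_real_derivative ((?d i * ?u j a + ?u i a * ?d j) * (h - a*q) - ?u i a * ?u j a * q) * PP r ({1..n}-{i,j}) h q) (at a)"
      by (rule derivative_eq_intros uf_deriv[OF Di] uf_deriv[OF Dj] refl | simp add: algebra_simps)+
  qed
  have "((\<lambda>t. Ccl n r eps xi nu h q t) has_real_derivative
     - (nu^2/2) * PP r {1..n} h q - nu * (\<Sum>i=1..n. (?d i * (h - a*q) - ?u i a * q) * PP r ({1..n}-{i}) h q)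
     + q/2 * (\<Sum>i=1..n. (2 * ?u i a * ?d i) * PP r ({1..n}-{i}) h q)
     + q/2 * (\<Sum>i=1..n. \<Sum>j\<in>{1..n}-{i}. ((?d i * ?u j a + ?u i a * ?d j) * (h - a*q) - ?u i a * ?u j a * q) * PP r ({1..n}-{i,j}) h q)) (at a)"
    unfolding Ccl_def[abs_def]
    by (intro DERIV_add DERIV_diff DERIV_cmult t1 t2 t3 t4)
  thus ?thesis unfolding DC_def .
qed

lemma sum_swap_offdiag:
  fixes f :: "nat \<Rightarrow> nat \<Rightarrow> real"
  assumes "finite N"
  shows "(\<Sum>i\<in>N. \<Sum>j\<in>N-{i}. f i j) = (\<Sum>j\<in>N. \<Sum>i\<in>N-{j}. f i j)"
proof -
  have *: "(\<Sum>i\<in>N. \<Sum>j\<in>{j. j \<in> N \<and> i \<noteq> j}. f i j) = (\<Sum>j\<in>N. \<Sum>i\<in>{i. i \<in> N \<and> i \<noteq> j}. f i j)"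
    by (rule sum.swap_restrict[OF assms assms])
  have e1: "\<And>i. {j. j \<in> N \<and> i \<noteq> j} = N - {i}" by auto
  have e2: "\<And>j. {i. i \<in> N \<and> i \<noteq> j} = N - {j}" by auto
  show ?thesis using * unfolding e1 e2 .
qed

lemma DC_alg:
  fixes u d P1 rr :: "nat \<Rightarrow> real" and P2 :: "nat \<Rightarrow> nat \<Rightarrow> real" and P nu h q a :: real
  assumes fin: "finite N"
    and R1: "\<forall>i\<in>N. P = (h - rr i * q) * P1 i"
    and R2: "\<forall>i\<in>N. \<forall>j\<in>N-{i}. P1 i = (h - rr j * q) * P2 i j"
    and P2sym: "\<forall>i j. P2 i j = P2 j i"
    and Rel: "\<forall>i\<in>N. d i * (a - rr i) = - u i / 2"
  shows "- (nu^2/2) * P - nu * (\<Sum>i\<in>N. (d i * (h - a*q) - u i * q) * P1 i)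
     + q/2 * (\<Sum>i\<in>N. (2 * u i * d i) * P1 i)
     + q/2 * (\<Sum>i\<in>N. \<Sum>j\<in>N-{i}. ((d i * u j + u i * d j) * (h - a*q) - u i * u j * q) * P2 i j)
   = - (nu/2 + (\<Sum>i\<in>N. d i)) * (nu * P - q * (\<Sum>i\<in>N. u i * P1 i))"
proof -
  have e1: "(\<Sum>i\<in>N. (d i * (h - a*q) - u i * q) * P1 i) = (\<Sum>i\<in>N. d i) * P - q/2 * (\<Sum>i\<in>N. u i * P1 i)"
  proof -
    have "\<And>i. i \<in> N \<Longrightarrow> (d i * (h - a*q) - u i * q) * P1 i = d i * P - q/2 * (u i * P1 i)"
    proof -
      fix i assume i: "i \<in> N"
      have x: "P - (h - rr i * q) * P1 i = 0" "d i * (a - rr i) + u i / 2 = 0" using R1 Rel i by auto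
      have "(d i * (h - a*q) - u i * q) * P1 i - (d i * P - q/2 * (u i * P1 i))
          = - q * P1 i * (d i * (a - rr i) + u i / 2) - d i * (P - (h - rr i * q) * P1 i)"
        by (simp add: algebra_simps)
      also have "\<dots> = 0" unfolding x by simp
      finally show "(d i * (h - a*q) - u i * q) * P1 i = d i * P - q/2 * (u i * P1 i)" by simp
    qed
    hence "(\<Sum>i\<in>N. (d i * (h - a*q) - u i * q) * P1 i) = (\<Sum>i\<in>N. d i * P - q/2 * (u i * P1 i))"
      by (rule sum.cong[OF refl])
    thus ?thesis by (simp add: sum_subtractf sum_distrib_left sum_distrib_right)
  qed
  define Y where "Y = (\<Sum>i\<in>N. \<Sum>j\<in>N-{i}. u i * d j * P1 i)"
  have e2: "(\<Sum>i\<in>N. \<Sum>j\<in>N-{i}. ((d i * u j + u i * d j) * (h - a*q) - u i * u j * q) * P2 i j) = 2 * Y"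
  proof -
    have "\<And>i j. i \<in> N \<Longrightarrow> j \<in> N-{i} \<Longrightarrow>
       ((d i * u j + u i * d j) * (h - a*q) - u i * u j * q) * P2 i j = d i * u j * P1 j + u i * d j * P1 i"
    proof -
      fix i j assume i: "i \<in> N" and j: "j \<in> N-{i}"
      have ji: "i \<in> N - {j}" "j \<in> N" using i j by auto
      have A: "P1 j = (h - rr i * q) * P2 i j" using R2 ji P2sym by metis
      have B: "P1 i = (h - rr j * q) * P2 i j" using R2 i j by metis
      have x: "P1 j - (h - rr i * q) * P2 i j = 0" "P1 i - (h - rr j * q) * P2 i j = 0"
        "d i * (a - rr i) + u i / 2 = 0" "d j * (a - rr j) + u j / 2 = 0"
        using A B Rel i ji by auto
      have "((d i * u j + u i * d j) * (h - a*q) - u i * u j * q) * P2 i j - (d i * u j * P1 j + u i * d j * P1 i)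
         = - u j * d i * (P1 j - (h - rr i * q) * P2 i j) - u i * d j * (P1 i - (h - rr j * q) * P2 i j)
           - u j * q * P2 i j * (d i * (a - rr i) + u i / 2) - u i * q * P2 i j * (d j * (a - rr j) + u j / 2)"
        by (simp add: algebra_simps)
      also have "\<dots> = 0" unfolding x by simp
      finally show "((d i * u j + u i * d j) * (h - a*q) - u i * u j * q) * P2 i j = d i * u j * P1 j + u i * d j * P1 i" by simp
    qed
    hence "(\<Sum>i\<in>N. \<Sum>j\<in>N-{i}. ((d i * u j + u i * d j) * (h - a*q) - u i * u j * q) * P2 i j)
        = (\<Sum>i\<in>N. \<Sum>j\<in>N-{i}. d i * u j * P1 j) + Y"
      unfolding Y_def sum.distrib[symmetric] by (intro sum.cong refl) auto
    also have "(\<Sum>i\<in>N. \<Sum>j\<in>N-{i}. d i * u j * P1 j) = Y"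
      unfolding Y_def by (subst sum_swap_offdiag[OF fin]) (simp add: algebra_simps)
    finally show ?thesis by simp
  qed
  have e3: "(\<Sum>i\<in>N. d i) * (\<Sum>i\<in>N. u i * P1 i) = (\<Sum>i\<in>N. u i * d i * P1 i) + Y"
  proof -
    have "(\<Sum>i\<in>N. d i) * (\<Sum>i\<in>N. u i * P1 i) = (\<Sum>i\<in>N. u i * P1 i * (\<Sum>j\<in>N. d j))"
      by (simp add: sum_distrib_left sum_distrib_right algebra_simps)
    also have "\<dots> = (\<Sum>i\<in>N. u i * d i * P1 i + (\<Sum>j\<in>N-{i}. u i * d j * P1 i))"
    proof (rule sum.cong[OF refl])
      fix i assume "i \<in> N"
      hence "(\<Sum>j\<in>N. d j) = d i + (\<Sum>j\<in>N-{i}. d j)" using fin by (simp add: sum.remove)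
      thus "u i * P1 i * (\<Sum>j\<in>N. d j) = u i * d i * P1 i + (\<Sum>j\<in>N-{i}. u i * d j * P1 i)"
        by (simp add: sum_distrib_left algebra_simps)
    qed
    finally show ?thesis unfolding Y_def by (simp add: sum.distrib)
  qed
  have e4: "(\<Sum>i\<in>N. (2 * u i * d i) * P1 i) = 2 * (\<Sum>i\<in>N. u i * d i * P1 i)"
    by (simp add: sum_distrib_left algebra_simps)
  show ?thesis unfolding e1 e2 e4
    using e3 by (simp add: algebra_simps power2_eq_square)
qed

lemma B_alg:
  fixes u d P1 rr :: "nat \<Rightarrow> real" and P nu h q a :: real
  assumes fin: "finite N"
    and R1: "\<forall>i\<in>N. P = (h - rr i * q) * P1 i"
    and Rel: "\<forall>i\<in>N. d i * (a - rr i) = - u i / 2"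
  shows "q * (nu * P - q * (\<Sum>i\<in>N. u i * P1 i)) - 2 * (h - a*q) * (- q * (\<Sum>i\<in>N. d i * P1 i))
       = 2 * (nu/2 + (\<Sum>i\<in>N. d i)) * q * P"
proof -
  have "\<And>i. i \<in> N \<Longrightarrow> (h - a*q) * (d i * P1 i) = d i * P + q/2 * (u i * P1 i)"
  proof -
    fix i assume i: "i \<in> N"
    have x: "P - (h - rr i * q) * P1 i = 0" "d i * (a - rr i) + u i / 2 = 0" using R1 Rel i by auto
    have "(h - a*q) * (d i * P1 i) - (d i * P + q/2 * (u i * P1 i))
        = - q * P1 i * (d i * (a - rr i) + u i / 2) - d i * (P - (h - rr i * q) * P1 i)"
      by (simp add: algebra_simps)
    also have "\<dots> = 0" unfolding x by simp
    finally show "(h - a*q) * (d i * P1 i) = d i * P + q/2 * (u i * P1 i)" by simp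
  qed
  hence "(h - a*q) * (\<Sum>i\<in>N. d i * P1 i) = (\<Sum>i\<in>N. d i) * P + q/2 * (\<Sum>i\<in>N. u i * P1 i)"
    by (simp add: sum_distrib_left sum_distrib_right sum.distrib)
  moreover have "2 * (h - a*q) * (- q * (\<Sum>i\<in>N. d i * P1 i)) = - 2 * q * ((h - a*q) * (\<Sum>i\<in>N. d i * P1 i))"
    by (simp only: mult_ac mult_minus_left mult_minus_right)
  ultimately have "2 * (h - a*q) * (- q * (\<Sum>i\<in>N. d i * P1 i)) = - 2 * q * ((\<Sum>i\<in>N. d i) * P + q/2 * (\<Sum>i\<in>N. u i * P1 i))"
    by simp
  thus ?thesis by (simp add: algebra_simps)
qed

lemma Bgen:
  "(\<Sum>k=0..n. (-1)^k * (nu * sigma n r (int k) + (\<Sum>i=1..n. f i * sigma1 n r i (int k - 1))) * h^(n-k) * q^k)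
   = nu * PP r {1..n} h q - q * (\<Sum>i\<in>{1..n}. f i * PP r ({1..n}-{i}) h q)"
proof -
  have "(\<Sum>k=0..n. (-1)^k * (nu * sigma n r (int k) + (\<Sum>i=1..n. f i * sigma1 n r i (int k - 1))) * h^(n-k) * q^k)
     = (\<Sum>k=0..n. nu * ((-1)^k * sigma n r (int k) * h^(n-k) * q^k)
         + (\<Sum>i\<in>{1..n}. f i * ((-1)^k * sigma1 n r i (int k - 1) * h^(n-k) * q^k)))"
    by (intro sum.cong refl) (simp add: algebra_simps sum_distrib_left sum_distrib_right)
  also have "\<dots> = nu * (\<Sum>k=0..n. (-1)^k * sigma n r (int k) * h^(n-k) * q^k)
      + (\<Sum>i\<in>{1..n}. f i * (\<Sum>k=0..n. (-1)^k * sigma1 n r i (int k - 1) * h^(n-k) * q^k))"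
    by (simp only: sum.distrib sum_distrib_left sum.swap[of _ "{0..n}"])
  also have "\<dots> = nu * PP r {1..n} h q + (\<Sum>i\<in>{1..n}. f i * (- q * PP r ({1..n}-{i}) h q))"
  proof -
    have "\<And>i. i \<in> {1..n} \<Longrightarrow> f i * (\<Sum>k=0..n. (-1)^k * sigma1 n r i (int k - 1) * h^(n-k) * q^k)
       = f i * (- q * PP r ({1..n}-{i}) h q)"
      by (simp only: T2)
    thus ?thesis unfolding T0 by (simp only: cong: sum.cong)
  qed
  finally show ?thesis by (simp add: sum_distrib_left algebra_simps sum_negf)
qed

lemma B_closed:
  "psum n (\<lambda>k. btil n r eps xi nu k a) h q = nu * PP r {1..n} h q - q * (\<Sum>i\<in>{1..n}. uf eps r xi i a * PP r ({1..n}-{i}) h q)"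
  unfolding psum_def uf_def btil_def by (rule Bgen)

definition bd where
  "bd n r eps xi k a = (-1)^k * (0 * sigma n r (int k) + (\<Sum>i=1..n. ud eps r xi i a * sigma1 n r i (int k - 1)))"

lemma btil_deriv:
  assumes "\<forall>i\<in>{1..n}. Delta eps r i a > 0"
  shows "((\<lambda>t. btil n r eps xi nu k t) has_real_derivative bd n r eps xi k a) (at a)"
proof -
  have "((\<lambda>t. (-1)^k * (nu * sigma n r (int k) + (\<Sum>i=1..n. uf eps r xi i t * sigma1 n r i (int k - 1)))) has_real_derivative
     (-1)^k * (0 + (\<Sum>i=1..n. ud eps r xi i a * sigma1 n r i (int k - 1)))) (at a)"
    by (intro DERIV_cmult DERIV_add DERIV_const DERIV_sum DERIV_cmult_right uf_deriv) (use assms in auto)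
  thus ?thesis unfolding bd_def btil_def uf_def by simp
qed

lemma Ba_closed:
  "psum n (\<lambda>k. bd n r eps xi k a) h q = - q * (\<Sum>i\<in>{1..n}. ud eps r xi i a * PP r ({1..n}-{i}) h q)"
  unfolding psum_def bd_def using Bgen[where nu=0 and f="\<lambda>i. ud eps r xi i a"] by simp

lemma G_closed:
  "psum n (\<lambda>k. Acoef n r (n-k)) h q = PP r {1..n} h q"
proof -
  have "\<And>k. k \<in> {0..n} \<Longrightarrow> Acoef n r (n-k) * h^(n-k) * q^k = (-1)^k * sigma n r (int k) * h^(n-k) * q^k"
  proof -
    fix k assume k: "k \<in> {0..n}"
    have "(-1::real)^k * (-1)^k = 1" by (simp add: power_mult_distrib[symmetric])
    thus "Acoef n r (n-k) * h^(n-k) * q^k = (-1)^k * sigma n r (int k) * h^(n-k) * q^k"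
      using k unfolding Acoef_def sym_def by simp
  qed
  hence "psum n (\<lambda>k. Acoef n r (n-k)) h q = (\<Sum>k=0..n. (-1)^k * sigma n r (int k) * h^(n-k) * q^k)"
    unfolding psum_def by (rule sum.cong[OF refl])
  thus ?thesis by (simp only: T0)
qed

lemma C_closed:
  assumes "\<forall>i\<in>{1..n}. Delta eps r i t > 0"
  shows "psum n (\<lambda>k. ctil n r eps xi nu k t) h q = Ccl n r eps xi nu h q t"
proof -
  have w: "\<And>i. i \<in> {1..n} \<Longrightarrow> (xi i)^2 / Delta eps r i t = uf eps r xi i t * uf eps r xi i t"
  proof -
    fix i assume "i \<in> {1..n}"
    hence "Delta eps r i t > 0" using assms by auto
    thus "(xi i)^2 / Delta eps r i t = uf eps r xi i t * uf eps r xi i t"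
      unfolding uf_def by (simp add: power2_eq_square)
  qed
  have v: "\<And>i j. (xi i * xi j) / sqrt (Delta eps r i t * Delta eps r j t) = uf eps r xi i t * uf eps r xi j t"
    unfolding uf_def by (simp add: real_sqrt_mult)
  have w2: "(\<Sum>i\<in>{1..n}. (xi i)^2 / Delta eps r i t * PP r ({1..n}-{i}) h q)
     = (\<Sum>i=1..n. (uf eps r xi i t * uf eps r xi i t) * PP r ({1..n}-{i}) h q)"
    by (rule sum.cong[OF refl]) (simp only: w)
  show ?thesis unfolding psum_def Csum_closed Ccl_def uf_def[symmetric] v w2 ..
qed

lemma ctil_deriv_ex:
  assumes "open I" "a \<in> I" "\<forall>t\<in>I. \<forall>i\<in>{1..n}. Delta eps r i t > 0"
  shows "((\<lambda>t. ctil n r eps xi nu k t) has_real_derivative deriv (\<lambda>t. ctil n r eps xi nu k t) a) (at a)"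
proof -
  obtain D where D: "((\<lambda>t. cu n r eps xi nu k t) has_real_derivative D) (at a)"
    using cu_diff assms by blast
  have "((\<lambda>t. ctil n r eps xi nu k t) has_real_derivative D) (at a)"
    by (rule has_field_derivative_transform_within_open[OF D assms(1,2)]) (use assms(3) ctil_cu in auto)
  thus ?thesis using DERIV_imp_deriv by metis
qed

lemma Ca_closed:
  assumes "open I" "a \<in> I" "\<forall>t\<in>I. \<forall>i\<in>{1..n}. Delta eps r i t > 0"
  shows "psum n (\<lambda>k. deriv (\<lambda>t. ctil n r eps xi nu k t) a) h q = DC n r eps xi nu h q a"
proof -
  have d1: "((\<lambda>t. psum n (\<lambda>k. ctil n r eps xi nu k t) ((\<lambda>_. h) t) q) has_real_derivative
     psum n (\<lambda>k. deriv (\<lambda>t. ctil n r eps xi nu k t) a) ((\<lambda>_. h) a) q + psumh n (\<lambda>k. ctil n r eps xi nu k a) ((\<lambda>_. h) a) q * 0) (at a)"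
    by (rule psum_deriv[OF ctil_deriv_ex[OF assms] DERIV_const])
  have d2: "((\<lambda>t. psum n (\<lambda>k. ctil n r eps xi nu k t) h q) has_real_derivative DC n r eps xi nu h q a) (at a)"
    by (rule has_field_derivative_transform_within_open[OF Ccl_deriv assms(1,2)])
       (use assms(2,3) C_closed in auto)
  show ?thesis using DERIV_unique[OF d1 d2] by simp
qed

lemma DC_eq:
  assumes "\<forall>i\<in>{1..n}. Delta eps r i a > 0" "\<forall>i\<in>{1..n}. eps i = 1 \<or> eps i = -1"
  shows "DC n r eps xi nu h q a = - xdot n r eps xi nu a * psum n (\<lambda>k. btil n r eps xi nu k a) h q"
proof -
  have R1: "\<forall>i\<in>{1..n}. PP r {1..n} h q = (h - r i * q) * PP r ({1..n}-{i}) h q"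
    unfolding PP_def by (auto intro: prod.remove)
  have R2: "\<forall>i\<in>{1..n}. \<forall>j\<in>{1..n}-{i}. PP r ({1..n}-{i}) h q = (h - r j * q) * PP r ({1..n}-{i,j}) h q"
  proof (intro ballI)
    fix i j assume "i \<in> {1..n}" "j \<in> {1..n}-{i}"
    hence "PP r ({1..n}-{i}) h q = (h - r j * q) * PP r ({1..n}-{i}-{j}) h q"
      unfolding PP_def by (intro prod.remove) auto
    moreover have "{1..n}-{i}-{j} = {1..n}-{i,j}" by auto
    ultimately show "PP r ({1..n}-{i}) h q = (h - r j * q) * PP r ({1..n}-{i,j}) h q" by simp
  qed
  have P2sym: "\<forall>i j. PP r ({1..n}-{i,j}) h q = PP r ({1..n}-{j,i}) h q" by (simp add: insert_commute)
  have Rel: "\<forall>i\<in>{1..n}. ud eps r xi i a * (a - r i) = - uf eps r xi i a / 2"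
    using assms ud_rel unfolding uf_def by auto
  show ?thesis
    unfolding DC_def B_closed xdot_eq[OF assms(1)]
    using DC_alg[OF _ R1 R2 P2sym Rel] by simp
qed

lemma br1:
  fixes a y pa py q phi phi' xd Pi H Ha HPa B Ba Bh Gv Gh Z :: real
  assumes "HPa = 2*Pi*phi" "Ha = 2*Pi*(phi'*pa) + q" "Pi = phi*pa" "phi * xd = a"
    "q*B - 2*(H - a*q)*Ba = 2*xd*q*Gv" "H = Pi^2 + a*q" "q = py^2"
  shows "Ha * (phi*B + Pi*(Bh*HPa) + y*(py*(Gh*HPa))) - HPa * ((phi'*pa)*B + Pi*(Ba + Bh*Ha) + y*(py*(Gh*Ha)))
         + 0 * Z - (2*a*py) * (py*Gv) = 0"
proof -
  have "Ha * (phi*B + Pi*(Bh*HPa) + y*(py*(Gh*HPa))) - HPa * ((phi'*pa)*B + Pi*(Ba + Bh*Ha) + y*(py*(Gh*Ha)))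
         + 0 * Z - (2*a*py) * (py*Gv)
      = phi * (q*B - 2*(H - a*q)*Ba) - 2*a*q*Gv"
    using assms(1,2,3,6,7) by (simp add: algebra_simps power2_eq_square)
  also have "\<dots> = 2*q*Gv*(phi*xd - a)" unfolding assms(5) by (simp add: algebra_simps)
  finally show ?thesis using assms(4) by simp
qed

lemma br2:
  fixes a y pa py q phi phi' xd Pi H Ha HPa B Ba Bh Gv Gh Ca Ch Z :: real
  assumes "HPa = 2*Pi*phi" "Ha = 2*Pi*(phi'*pa) + q" "Pi = phi*pa" "phi * xd = a"
    "q*B - 2*(H - a*q)*Ba = 2*xd*q*Gv" "H = Pi^2 + a*q" "q = py^2" "Ca = - xd * B"
  shows "Ha * (py*(Ch*HPa) + y*(phi*B + Pi*(Bh*HPa)) + y^2/2*(py*(Gh*HPa)))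
       - HPa * (py*(Ca + Ch*Ha) + y*((phi'*pa)*B + Pi*(Ba + Bh*Ha)) + y^2/2*(py*(Gh*Ha)))
       + 0 * Z - (2*a*py) * (Pi*B + y*(py*Gv)) = 0"
proof -
  have "Ha * (py*(Ch*HPa) + y*(phi*B + Pi*(Bh*HPa)) + y^2/2*(py*(Gh*HPa)))
       - HPa * (py*(Ca + Ch*Ha) + y*((phi'*pa)*B + Pi*(Ba + Bh*Ha)) + y^2/2*(py*(Gh*Ha)))
       + 0 * Z - (2*a*py) * (Pi*B + y*(py*Gv))
      = y * (phi * (q*B - 2*(H - a*q)*Ba) - 2*a*q*Gv) + 2*Pi*py*B*(phi*xd - a)"
    using assms(1,2,3,6,7,8) by (simp add: algebra_simps power2_eq_square)
  also have "\<dots> = 2*q*Gv*y*(phi*xd - a) + 2*Pi*py*B*(phi*xd - a)" unfolding assms(5) by (simp add: algebra_simps)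
  finally show ?thesis using assms(4) by simp
qed

lemma HF_eq: "HF n r eps xi nu (t,y,pa,py) = (t / xdot n r eps xi nu t * pa)^2 + t * py^2"
  by (simp add: HF_def PiF_def)
lemma PiF_eq: "PiF n r eps xi nu (t,y,pa,py) = t / xdot n r eps xi nu t * pa"
  by (simp add: PiF_def)

lemma pow2pow: "((x::real)^2)^k = (x^k)^2"
  by (simp add: power_mult[symmetric] mult.commute)

lemma Q1F_eq: "Q1F n r eps xi nu (t,y,pa,py) = PiF n r eps xi nu (t,y,pa,py) *
    psum n (\<lambda>k. btil n r eps xi nu k t) (HF n r eps xi nu (t,y,pa,py)) (py^2)"
  unfolding Q1F_def psum_def by (simp add: sum_distrib_left power_mult pow2pow algebra_simps)
lemma Q2F_eq: "Q2F n r eps xi nu (t,y,pa,py) = py *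
    psum n (\<lambda>k. ctil n r eps xi nu k t) (HF n r eps xi nu (t,y,pa,py)) (py^2)"
  unfolding Q2F_def psum_def by (simp add: sum_distrib_left power_mult pow2pow algebra_simps)
lemma GF_eq: "GF n r eps xi nu (t,y,pa,py) = py *
    psum n (\<lambda>k. Acoef n r (n-k)) (HF n r eps xi nu (t,y,pa,py)) (py^2)"
  unfolding GF_def psum_def Py_def by (simp add: sum_distrib_left power_mult pow2pow algebra_simps)

context
  fixes n :: nat and r eps xi :: "nat \<Rightarrow> real" and nu :: real and I :: "real set"
  assumes oI: "open I"
    and pos: "\<forall>t\<in>I. \<forall>i\<in>{1..n}. Delta eps r i t > 0"
    and xnz: "\<forall>t\<in>I. xdot n r eps xi nu t \<noteq> 0"
    and epsv: "\<forall>i\<in>{1..n}. eps i = 1 \<or> eps i = -1"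
begin

lemma pointwise:
  fixes a y pa py :: real
  assumes aI: "a \<in> I"
  defines "xd \<equiv> xdot n r eps xi nu a"
  defines "phi \<equiv> a / xd"
  defines "Pm \<equiv> phi * pa"
  defines "q \<equiv> py^2"
  defines "H \<equiv> Pm^2 + a * q"
  defines "HPa \<equiv> 2 * Pm * phi"
  defines "B \<equiv> psum n (\<lambda>k. btil n r eps xi nu k a) H q"
  defines "Bh \<equiv> psumh n (\<lambda>k. btil n r eps xi nu k a) H q"
  defines "Ba \<equiv> psum n (\<lambda>k. bd n r eps xi k a) H q"
  defines "Gv \<equiv> psum n (\<lambda>k. Acoef n r (n-k)) H q"
  defines "Gh \<equiv> psumh n (\<lambda>k. Acoef n r (n-k)) H q"
  defines "Ca \<equiv> psum n (\<lambda>k. deriv (\<lambda>t. ctil n r eps xi nu k t) a) H q"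
  defines "Ch \<equiv> psumh n (\<lambda>k. ctil n r eps xi nu k a) H q"
  shows "poisson (HF n r eps xi nu) Py (a,y,pa,py) = 0
    \<and> poisson (HF n r eps xi nu) (S1F n r eps xi nu) (a,y,pa,py) = 0
    \<and> poisson (HF n r eps xi nu) (S2F n r eps xi nu) (a,y,pa,py) = 0
    \<and> grad (HF n r eps xi nu) (a,y,pa,py) 1 = 0
    \<and> grad (HF n r eps xi nu) (a,y,pa,py) 2 = 2 * Pm * phi
    \<and> grad Py (a,y,pa,py) = (\<lambda>k. if k = 0 \<or> k = 1 \<or> k = 2 then 0 else 1)
    \<and> grad (S1F n r eps xi nu) (a,y,pa,py) 1 = GF n r eps xi nu (a,y,pa,py)
    \<and> grad (S2F n r eps xi nu) (a,y,pa,py) 1 = S1F n r eps xi nu (a,y,pa,py)"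
proof -
  obtain xd' where dxd: "(xdot n r eps xi nu has_real_derivative xd') (at a)"
    using xdot_diff[OF oI aI pos] by blast
  have xd0: "xd \<noteq> 0" using xnz aI unfolding xd_def by auto
  define phi' where "phi' = (1 * xd - a * xd') / (xd * xd)"
  define Ha where "Ha = 2 * Pm * (phi' * pa) + q"
  have dphi: "((\<lambda>t. t / xdot n r eps xi nu t) has_real_derivative phi') (at a)"
    unfolding phi'_def xd_def by (rule DERIV_divide[OF DERIV_ident dxd xd0[unfolded xd_def]])
  have dPt: "((\<lambda>t. t / xdot n r eps xi nu t * pa) has_real_derivative phi' * pa) (at a)"
    by (rule DERIV_cmult_right[OF dphi])
  have Pta: "a / xdot n r eps xi nu a * pa = Pm" unfolding Pm_def phi_def xd_def ..
  have Hta: "HF n r eps xi nu (a,y,pa,py) = H" unfolding HF_eq H_def q_def Pta ..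
  have dHt: "((\<lambda>t. HF n r eps xi nu (t,y,pa,py)) has_real_derivative Ha) (at a)"
  proof -
    have "((\<lambda>t. (t / xdot n r eps xi nu t * pa)^2 + t * py^2) has_real_derivative
        of_nat 2 * (phi' * pa * (a / xdot n r eps xi nu a * pa)^(2 - Suc 0)) + 1 * py^2) (at a)"
      by (intro DERIV_add DERIV_power dPt DERIV_cmult_right DERIV_ident)
    thus ?thesis unfolding HF_eq Pta Ha_def q_def by (simp add: algebra_simps)
  qed
  have dHs: "((\<lambda>s. HF n r eps xi nu (a,y,s,py)) has_real_derivative HPa) (at pa)"
  proof -
    have "((\<lambda>s. (a / xdot n r eps xi nu a * s)^2 + a * py^2) has_real_derivative
        of_nat 2 * (a / xdot n r eps xi nu a * 1 * (a / xdot n r eps xi nu a * pa)^(2 - Suc 0)) + 0) (at pa)"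
      by (intro DERIV_add DERIV_power DERIV_cmult DERIV_ident DERIV_const)
    thus ?thesis unfolding HF_eq Pta HPa_def phi_def xd_def by (simp add: algebra_simps)
  qed
  have dHy: "((\<lambda>s. HF n r eps xi nu (a,s,pa,py)) has_real_derivative 0) (at y)"
    unfolding HF_eq by (rule DERIV_const)
  have dHp: "((\<lambda>s. HF n r eps xi nu (a,y,pa,s)) has_real_derivative 2 * a * py) (at py)"
  proof -
    have "((\<lambda>s. (a / xdot n r eps xi nu a * pa)^2 + a * s^2) has_real_derivative
        0 + a * (of_nat 2 * (1 * py^(2 - Suc 0)))) (at py)"
      by (intro DERIV_add DERIV_power DERIV_cmult DERIV_ident DERIV_const)
    thus ?thesis unfolding HF_eq by (simp add: algebra_simps)
  qed
  have S1e: "\<And>t y pa py. S1F n r eps xi nu (t,y,pa,py) = t / xdot n r eps xi nu t * pa *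
     psum n (\<lambda>k. btil n r eps xi nu k t) (HF n r eps xi nu (t,y,pa,py)) (py^2)
     + y * (py * psum n (\<lambda>k. Acoef n r (n-k)) (HF n r eps xi nu (t,y,pa,py)) (py^2))"
    by (simp add: S1F_def Q1F_eq GF_eq PiF_eq)
  have S2e: "\<And>t y pa py. S2F n r eps xi nu (t,y,pa,py) = py * psum n (\<lambda>k. ctil n r eps xi nu k t) (HF n r eps xi nu (t,y,pa,py)) (py^2)
     + y * (t / xdot n r eps xi nu t * pa *
     psum n (\<lambda>k. btil n r eps xi nu k t) (HF n r eps xi nu (t,y,pa,py)) (py^2))
     + y^2/2 * (py * psum n (\<lambda>k. Acoef n r (n-k)) (HF n r eps xi nu (t,y,pa,py)) (py^2))"
    by (simp add: S2F_def Q1F_eq Q2F_eq GF_eq PiF_eq)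
  have posa: "\<forall>i\<in>{1..n}. Delta eps r i a > 0" using pos aI by auto
  have dBt: "((\<lambda>t. psum n (\<lambda>k. btil n r eps xi nu k t) (HF n r eps xi nu (t,y,pa,py)) q) has_real_derivative Ba + Bh*Ha) (at a)"
    using psum_deriv[where c="\<lambda>k t. btil n r eps xi nu k t" and c'="\<lambda>k. bd n r eps xi k a" and H="\<lambda>t. HF n r eps xi nu (t,y,pa,py)" and H'=Ha and q=q,
        OF btil_deriv[OF posa] dHt]
    unfolding Hta Ba_def Bh_def by simp
  have dCt: "((\<lambda>t. psum n (\<lambda>k. ctil n r eps xi nu k t) (HF n r eps xi nu (t,y,pa,py)) q) has_real_derivative Ca + Ch*Ha) (at a)"
    using psum_deriv[where c="\<lambda>k t. ctil n r eps xi nu k t" and c'="\<lambda>k. deriv (\<lambda>t. ctil n r eps xi nu k t) a" and H="\<lambda>t. HF n r eps xi nu (t,y,pa,py)" and H'=Ha and q=q,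
        OF ctil_deriv_ex[OF oI aI pos] dHt]
    unfolding Hta Ca_def Ch_def by simp
  have dGt: "((\<lambda>t. psum n (\<lambda>k. Acoef n r (n-k)) (HF n r eps xi nu (t,y,pa,py)) q) has_real_derivative Gh*Ha) (at a)"
    using psum_deriv_const[OF dHt, where n=n and c="\<lambda>k. Acoef n r (n-k)" and q=q] unfolding Hta Gh_def .
  have dBs: "((\<lambda>s. psum n (\<lambda>k. btil n r eps xi nu k a) (HF n r eps xi nu (a,y,s,py)) q) has_real_derivative Bh*HPa) (at pa)"
    using psum_deriv_const[OF dHs, where n=n and c="\<lambda>k. btil n r eps xi nu k a" and q=q] unfolding Hta Bh_def .
  have dCs: "((\<lambda>s. psum n (\<lambda>k. ctil n r eps xi nu k a) (HF n r eps xi nu (a,y,s,py)) q) has_real_derivative Ch*HPa) (at pa)"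
    using psum_deriv_const[OF dHs, where n=n and c="\<lambda>k. ctil n r eps xi nu k a" and q=q] unfolding Hta Ch_def .
  have dGs: "((\<lambda>s. psum n (\<lambda>k. Acoef n r (n-k)) (HF n r eps xi nu (a,y,s,py)) q) has_real_derivative Gh*HPa) (at pa)"
    using psum_deriv_const[OF dHs, where n=n and c="\<lambda>k. Acoef n r (n-k)" and q=q] unfolding Hta Gh_def .
  have dPs: "((\<lambda>s. a / xdot n r eps xi nu a * s) has_real_derivative phi) (at pa)"
    unfolding phi_def xd_def using DERIV_cmult[OF DERIV_ident, of "a / xdot n r eps xi nu a" pa] by simp
  have Bv: "psum n (\<lambda>k. btil n r eps xi nu k a) (HF n r eps xi nu (a,y,pa,py)) q = B" unfolding Hta B_def ..
  have Gvv: "psum n (\<lambda>k. Acoef n r (n-k)) (HF n r eps xi nu (a,y,pa,py)) q = Gv" unfolding Hta Gv_def ..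
  have S1a: "((\<lambda>t. S1F n r eps xi nu (t,y,pa,py)) has_real_derivative (phi'*pa)*B + Pm*(Ba + Bh*Ha) + y*(py*(Gh*Ha))) (at a)"
  proof -
    have "((\<lambda>t. t / xdot n r eps xi nu t * pa * psum n (\<lambda>k. btil n r eps xi nu k t) (HF n r eps xi nu (t,y,pa,py)) q
        + y * (py * psum n (\<lambda>k. Acoef n r (n-k)) (HF n r eps xi nu (t,y,pa,py)) q)) has_real_derivative
        (phi' * pa * psum n (\<lambda>k. btil n r eps xi nu k a) (HF n r eps xi nu (a,y,pa,py)) q + (Ba + Bh*Ha) * (a / xdot n r eps xi nu a * pa))
        + y * (py * (Gh*Ha))) (at a)"
      by (intro DERIV_add DERIV_mult dPt dBt DERIV_cmult dGt)
    thus ?thesis unfolding S1e q_def[symmetric] Bv Pta by (simp add: algebra_simps)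
  qed
  have S1s: "((\<lambda>s. S1F n r eps xi nu (a,y,s,py)) has_real_derivative phi*B + Pm*(Bh*HPa) + y*(py*(Gh*HPa))) (at pa)"
  proof -
    have "((\<lambda>s. a / xdot n r eps xi nu a * s * psum n (\<lambda>k. btil n r eps xi nu k a) (HF n r eps xi nu (a,y,s,py)) q
        + y * (py * psum n (\<lambda>k. Acoef n r (n-k)) (HF n r eps xi nu (a,y,s,py)) q)) has_real_derivative
        (phi * psum n (\<lambda>k. btil n r eps xi nu k a) (HF n r eps xi nu (a,y,pa,py)) q + (Bh*HPa) * (a / xdot n r eps xi nu a * pa))
        + y * (py * (Gh*HPa))) (at pa)"
      by (intro DERIV_add DERIV_mult dPs dBs DERIV_cmult dGs)
    thus ?thesis unfolding S1e q_def[symmetric] Bv Pta by (simp add: algebra_simps)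
  qed
  have hs: "\<And>s. HF n r eps xi nu (a,s,pa,py) = H" using Hta by (simp add: HF_eq)
  have S1y: "((\<lambda>s. S1F n r eps xi nu (a,s,pa,py)) has_real_derivative py*Gv) (at y)"
  proof -
    have "((\<lambda>s. Pm * B + s * (py * Gv)) has_real_derivative 0 + 1 * (py * Gv)) (at y)"
      by (intro DERIV_add DERIV_const DERIV_cmult_right DERIV_ident)
    thus ?thesis unfolding S1e q_def[symmetric] hs Pta B_def[symmetric] Gv_def[symmetric] by simp
  qed
  have S2a: "((\<lambda>t. S2F n r eps xi nu (t,y,pa,py)) has_real_derivative
          py*(Ca + Ch*Ha) + y*((phi'*pa)*B + Pm*(Ba + Bh*Ha)) + y^2/2*(py*(Gh*Ha))) (at a)"
  proof -
    have "((\<lambda>t. py * psum n (\<lambda>k. ctil n r eps xi nu k t) (HF n r eps xi nu (t,y,pa,py)) q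
        + y * (t / xdot n r eps xi nu t * pa * psum n (\<lambda>k. btil n r eps xi nu k t) (HF n r eps xi nu (t,y,pa,py)) q)
        + y^2/2 * (py * psum n (\<lambda>k. Acoef n r (n-k)) (HF n r eps xi nu (t,y,pa,py)) q)) has_real_derivative
        py * (Ca + Ch*Ha) + y * (phi' * pa * psum n (\<lambda>k. btil n r eps xi nu k a) (HF n r eps xi nu (a,y,pa,py)) q + (Ba + Bh*Ha) * (a / xdot n r eps xi nu a * pa))
        + y^2/2 * (py * (Gh*Ha))) (at a)"
      by (intro DERIV_add DERIV_mult dPt dBt DERIV_cmult dGt dCt)
    thus ?thesis unfolding S2e q_def[symmetric] Bv Pta by (simp add: algebra_simps)
  qed
  have S2s: "((\<lambda>s. S2F n r eps xi nu (a,y,s,py)) has_real_derivative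
          py*(Ch*HPa) + y*(phi*B + Pm*(Bh*HPa)) + y^2/2*(py*(Gh*HPa))) (at pa)"
  proof -
    have "((\<lambda>s. py * psum n (\<lambda>k. ctil n r eps xi nu k a) (HF n r eps xi nu (a,y,s,py)) q
        + y * (a / xdot n r eps xi nu a * s * psum n (\<lambda>k. btil n r eps xi nu k a) (HF n r eps xi nu (a,y,s,py)) q)
        + y^2/2 * (py * psum n (\<lambda>k. Acoef n r (n-k)) (HF n r eps xi nu (a,y,s,py)) q)) has_real_derivative
        py * (Ch*HPa) + y * (phi * psum n (\<lambda>k. btil n r eps xi nu k a) (HF n r eps xi nu (a,y,pa,py)) q + (Bh*HPa) * (a / xdot n r eps xi nu a * pa))
        + y^2/2 * (py * (Gh*HPa))) (at pa)"
      by (intro DERIV_add DERIV_mult dPs dBs DERIV_cmult dGs dCs)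
    thus ?thesis unfolding S2e q_def[symmetric] Bv Pta by (simp add: algebra_simps)
  qed
  have S2y: "((\<lambda>s. S2F n r eps xi nu (a,s,pa,py)) has_real_derivative Pm*B + y*(py*Gv)) (at y)"
  proof -
    let ?C = "py * psum n (\<lambda>k. ctil n r eps xi nu k a) H q"
    have dsq: "((\<lambda>x. x^2/2) has_real_derivative y) (at y)"
      by (rule derivative_eq_intros refl | simp)+
    have "((\<lambda>s. ?C + s * (Pm * B) + s^2/2 * (py * Gv)) has_real_derivative 0 + 1 * (Pm * B) + y * (py * Gv)) (at y)"
      by (intro DERIV_add DERIV_const DERIV_cmult_right DERIV_ident dsq)
    thus ?thesis unfolding S2e q_def[symmetric] hs Pta B_def[symmetric] Gv_def[symmetric] by simp
  qed
  have phixd: "phi * xd = a" unfolding phi_def using xd0 by simp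
  have xdv: "xd = nu/2 + (\<Sum>i\<in>{1..n}. ud eps r xi i a)" unfolding xd_def by (rule xdot_eq[OF posa])
  have R1: "\<forall>i\<in>{1..n}. PP r {1..n} H q = (H - r i * q) * PP r ({1..n}-{i}) H q"
    unfolding PP_def by (auto intro: prod.remove)
  have Rel: "\<forall>i\<in>{1..n}. ud eps r xi i a * (a - r i) = - uf eps r xi i a / 2"
    using posa epsv ud_rel unfolding uf_def by auto
  have I1: "q*B - 2*(H - a*q)*Ba = 2*xd*q*Gv"
    unfolding B_def Ba_def Gv_def B_closed Ba_closed G_closed xdv
    using B_alg[OF _ R1 Rel, of nu] by simp
  have I2: "Ca = - xd * B"
    unfolding Ca_def Ca_closed[OF oI aI pos] DC_eq[OF posa epsv] B_def xd_def ..
  have Hdef: "H = Pm^2 + a*q" unfolding H_def ..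
  have HPadef: "HPa = 2 * Pm * phi" unfolding HPa_def ..
  have Pmdef: "Pm = phi * pa" unfolding Pm_def ..
  have qdef: "q = py^2" unfolding q_def ..
  have D1: "d_a (HF n r eps xi nu) (a,y,pa,py) = Ha" "d_Pa (HF n r eps xi nu) (a,y,pa,py) = HPa"
    "d_y (HF n r eps xi nu) (a,y,pa,py) = 0" "d_Py (HF n r eps xi nu) (a,y,pa,py) = 2 * a * py"
    unfolding d_a_def d_Pa_def d_y_def d_Py_def by (simp_all add: DERIV_imp_deriv dHt dHs dHy dHp)
  have D2: "d_a (S1F n r eps xi nu) (a,y,pa,py) = (phi'*pa)*B + Pm*(Ba + Bh*Ha) + y*(py*(Gh*Ha))"
    "d_Pa (S1F n r eps xi nu) (a,y,pa,py) = phi*B + Pm*(Bh*HPa) + y*(py*(Gh*HPa))"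
    "d_y (S1F n r eps xi nu) (a,y,pa,py) = py*Gv"
    unfolding d_a_def d_Pa_def d_y_def by (simp_all add: DERIV_imp_deriv S1a S1s S1y)
  have D3: "d_a (S2F n r eps xi nu) (a,y,pa,py) = py*(Ca + Ch*Ha) + y*((phi'*pa)*B + Pm*(Ba + Bh*Ha)) + y^2/2*(py*(Gh*Ha))"
    "d_Pa (S2F n r eps xi nu) (a,y,pa,py) = py*(Ch*HPa) + y*(phi*B + Pm*(Bh*HPa)) + y^2/2*(py*(Gh*HPa))"
    "d_y (S2F n r eps xi nu) (a,y,pa,py) = Pm*B + y*(py*Gv)"
    using DERIV_imp_deriv[OF S2a] DERIV_imp_deriv[OF S2s] DERIV_imp_deriv[OF S2y]
    unfolding d_a_def d_Pa_def d_y_def by simp_all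
  have DP: "d_a Py (a,y,pa,py) = 0" "d_Pa Py (a,y,pa,py) = 0" "d_y Py (a,y,pa,py) = 0" "d_Py Py (a,y,pa,py) = 1"
    unfolding d_a_def d_Pa_def d_y_def d_Py_def Py_def by simp_all
  have P1: "poisson (HF n r eps xi nu) Py (a,y,pa,py) = 0"
    unfolding poisson_def D1 DP by simp
  have P2: "poisson (HF n r eps xi nu) (S1F n r eps xi nu) (a,y,pa,py) = 0"
    unfolding poisson_def D1 D2
    by (rule br1[OF HPadef Ha_def Pmdef phixd I1 Hdef qdef])
  have P3: "poisson (HF n r eps xi nu) (S2F n r eps xi nu) (a,y,pa,py) = 0"
    unfolding poisson_def D1 D3
    by (rule br2[OF HPadef Ha_def Pmdef phixd I1 Hdef qdef I2])
  have GFv: "GF n r eps xi nu (a,y,pa,py) = py * Gv"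
    unfolding GF_eq Hta q_def[symmetric] Gv_def ..
  have S1v: "S1F n r eps xi nu (a,y,pa,py) = Pm*B + y*(py*Gv)"
    unfolding S1e Hta q_def[symmetric] Pta B_def[symmetric] Gv_def[symmetric] ..
  show ?thesis
    using P1 P2 P3 D1 D2 D3 DP GFv S1v unfolding grad_def HPa_def by (auto simp: fun_eq_iff)
qed

end

lemma lin_indep_crit:
  assumes "u 1 = 0" "u 2 \<noteq> 0" "v = (\<lambda>k. if k = 0 \<or> k = 1 \<or> k = 2 then 0 else 1)" "w 1 \<noteq> 0"
  shows "lin_indep3 u v w"
  unfolding lin_indep3_def
proof (intro allI impI)
  fix c1 c2 c3 assume h: "\<forall>k<4. c1 * u k + c2 * v k + c3 * w k = 0"
  have "c3 * w 1 = 0" using h[rule_format, of 1] assms by simp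
  hence c3: "c3 = 0" using assms by simp
  have "c1 * u 2 = 0" using h[rule_format, of 2] assms c3 by simp
  hence c1: "c1 = 0" using assms by simp
  have "c2 = 0" using h[rule_format, of 3] assms c1 c3 by simp
  thus "c1 = 0 \<and> c2 = 0 \<and> c3 = 0" using c1 c3 by simp
qed

lemma choose_pa:
  fixes c pa e :: real
  assumes V: "finite V" and c: "c \<noteq> 0" and e: "e > 0"
  shows "\<exists>pa'. \<bar>pa' - pa\<bar> < e \<and> pa' \<noteq> 0 \<and> (c * pa')^2 \<notin> V"
proof -
  define g where "g s = (c * (\<bar>pa\<bar> + s))^2" for s
  have inj: "inj_on g {0<..}"
  proof (rule inj_onI)
    fix s1 s2 assume s: "s1 \<in> {0<..}" "s2 \<in> {0<..}" and "g s1 = g s2"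
    hence "sqrt (g s1) = sqrt (g s2)" by simp
    hence "\<bar>c * (\<bar>pa\<bar> + s1)\<bar> = \<bar>c * (\<bar>pa\<bar> + s2)\<bar>" unfolding g_def real_sqrt_abs .
    hence "\<bar>c\<bar> * (\<bar>pa\<bar> + s1) = \<bar>c\<bar> * (\<bar>pa\<bar> + s2)" using s by (simp add: abs_mult)
    thus "s1 = s2" using c by simp
  qed
  have fin: "finite (g -` V \<inter> {0<..})" by (rule finite_vimage_IntI[OF V inj])
  have "infinite {0<..<e}" using e by simp
  hence "\<not> {0<..<e} \<subseteq> g -` V \<inter> {0<..}" using fin finite_subset by blast
  then obtain s where s0: "s \<in> {0<..<e}" "s \<notin> g -` V \<inter> {0<..}" by blast
  hence s: "s \<in> {0<..<e}" "g s \<notin> V" by auto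
  define pa' where "pa' = (if pa \<ge> 0 then pa + s else pa - s)"
  have "\<bar>pa'\<bar> = \<bar>pa\<bar> + s" using s unfolding pa'_def by auto
  moreover have "(c * pa')^2 = c^2 * \<bar>pa'\<bar>^2" by (simp add: power_mult_distrib)
  ultimately have "(c * pa')^2 = g s" unfolding g_def by (simp add: power_mult_distrib)
  moreover have "\<bar>pa' - pa\<bar> < e" "pa' \<noteq> 0" using s unfolding pa'_def by auto
  ultimately show ?thesis using s(2) by (intro exI[of _ pa']) simp
qed

lemma GF_val: "GF n r eps xi nu (a,y,pa,py) = py * (\<Prod>i\<in>{1..n}. (a / xdot n r eps xi nu a * pa)^2 + a * py^2 - r i * py^2)"
  unfolding GF_eq G_closed HF_eq PP_def by simp

lemma S1F_y: "S1F n r eps xi nu (a,y',pa,py) = S1F n r eps xi nu (a,y,pa,py) + (y' - y) * GF n r eps xi nu (a,y,pa,py)"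
proof -
  have "Q1F n r eps xi nu (a,y',pa,py) = Q1F n r eps xi nu (a,y,pa,py)" "GF n r eps xi nu (a,y',pa,py) = GF n r eps xi nu (a,y,pa,py)"
    unfolding Q1F_eq GF_eq HF_eq PiF_eq by simp_all
  thus ?thesis unfolding S1F_def by (simp add: algebra_simps)
qed

lemma dist3: "dist (a::real, y'::real, pa'::real, py'::real) (a, y, pa, py) \<le> \<bar>y' - y\<bar> + \<bar>pa' - pa\<bar> + \<bar>py' - py\<bar>"
proof -
  have "dist (a, y', pa', py') (a, y, pa, py) \<le> dist (a, y', pa', py') (a, y, pa', py') + dist (a, y, pa', py') (a, y, pa, py)"
    by (rule dist_triangle)
  also have "dist (a, y, pa', py') (a, y, pa, py) \<le> dist (a, y, pa', py') (a, y, pa, py') + dist (a, y, pa, py') (a, y, pa, py)"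
    by (rule dist_triangle)
  finally show ?thesis by (simp add: dist_Pair_Pair dist_real_def)
qed

context
  fixes n :: nat and r eps xi :: "nat \<Rightarrow> real" and nu :: real and I :: "real set"
  assumes pos: "\<forall>t\<in>I. \<forall>i\<in>{1..n}. Delta eps r i t > 0"
    and xnz: "\<forall>t\<in>I. xdot n r eps xi nu t \<noteq> 0"
    and Ipos: "I \<subseteq> {0<..}"
begin

lemma density:
  assumes aI: "a \<in> I" and e: "e > 0"
  shows "\<exists>y' pa' py'. pa' \<noteq> 0 \<and> GF n r eps xi nu (a,y',pa',py') \<noteq> 0 \<and> S1F n r eps xi nu (a,y',pa',py') \<noteq> 0
     \<and> dist (a,y',pa',py') (a,y,pa,py) < e"
proof -
  define py' where "py' = (if py \<noteq> 0 then py else e/6)"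
  have py'0: "py' \<noteq> 0" and dpy: "\<bar>py' - py\<bar> < e/3" unfolding py'_def using e by auto
  define c where "c = a / xdot n r eps xi nu a"
  have c0: "c \<noteq> 0" unfolding c_def using aI xnz Ipos by auto
  define V where "V = (\<lambda>i. (r i - a) * py'^2) ` {1..n}"
  have "finite V" unfolding V_def by simp
  then obtain pa' where pa': "\<bar>pa' - pa\<bar> < e/3" "pa' \<noteq> 0" "(c * pa')^2 \<notin> V"
    using choose_pa[OF _ c0, where e="e/3" and pa=pa and V=V] e by auto
  have G0: "GF n r eps xi nu (a,y,pa',py') \<noteq> 0"
  proof -
    have "\<forall>i\<in>{1..n}. (c * pa')^2 + a * py'^2 - r i * py'^2 \<noteq> 0"
    proof
      fix i assume i: "i \<in> {1..n}"
      show "(c * pa')^2 + a * py'^2 - r i * py'^2 \<noteq> 0"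
      proof
        assume "(c * pa')^2 + a * py'^2 - r i * py'^2 = 0"
        hence "(c * pa')^2 = (r i - a) * py'^2" by (simp add: algebra_simps)
        hence "(c * pa')^2 \<in> V" unfolding V_def using i by auto
        thus False using pa' by simp
      qed
    qed
    hence "(\<Prod>i\<in>{1..n}. (c * pa')^2 + a * py'^2 - r i * py'^2) \<noteq> 0" by simp
    thus ?thesis unfolding GF_val c_def[symmetric] using py'0 by simp
  qed
  define y' where "y' = (if S1F n r eps xi nu (a,y,pa',py') \<noteq> 0 then y else y + e/6)"
  have dy: "\<bar>y' - y\<bar> < e/3" unfolding y'_def using e by auto
  have G1: "GF n r eps xi nu (a,y',pa',py') \<noteq> 0"
    using G0 unfolding GF_val .
  have S0: "S1F n r eps xi nu (a,y',pa',py') \<noteq> 0"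
  proof (cases "S1F n r eps xi nu (a,y,pa',py') \<noteq> 0")
    case True thus ?thesis unfolding y'_def by simp
  next
    case False
    hence "S1F n r eps xi nu (a,y',pa',py') = (e/6) * GF n r eps xi nu (a,y,pa',py')"
      unfolding y'_def using S1F_y[of n r eps xi nu a "y + e/6" pa' py' y] by simp
    moreover have "(e/6) * GF n r eps xi nu (a,y,pa',py') \<noteq> 0" using G0 e by simp
    ultimately show ?thesis by metis
  qed
  have "dist (a,y',pa',py') (a,y,pa,py) < e"
    using dist3[of a y' pa' py' y pa py] dy dpy pa'(1) by linarith
  thus ?thesis using pa'(2) G1 S0 by blast
qed

end

theorem theorem2:
  fixes n :: nat and r eps xi :: "nat \<Rightarrow> real" and nu :: real and I :: "real set"
  assumes "n \<ge> 1"
    and "inj_on r {1..n}"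
    and "\<forall>i\<in>{1..n}. eps i = 1 \<or> eps i = -1"
    and "open I" and "is_interval I" and "I \<noteq> {}" and "I \<subseteq> {0<..}"
    and "\<forall>a\<in>I. \<forall>i\<in>{1..n}. Delta eps r i a > 0"
    and "\<forall>a\<in>I. xdot n r eps xi nu a \<noteq> 0"
  shows "(\<forall>p\<in>I \<times> UNIV. poisson (HF n r eps xi nu) Py p = 0
                      \<and> poisson (HF n r eps xi nu) (S1F n r eps xi nu) p = 0
                      \<and> poisson (HF n r eps xi nu) (S2F n r eps xi nu) p = 0)
       \<and> fun_indep3 (I \<times> UNIV) (HF n r eps xi nu) Py (S1F n r eps xi nu)
       \<and> fun_indep3 (I \<times> UNIV) (HF n r eps xi nu) Py (S2F n r eps xi nu)"
proof -
  note pw = pointwise[OF assms(4) assms(8) assms(9) assms(3)]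
  note dens = density[OF assms(8) assms(9) assms(7)]
  have br: "\<forall>p\<in>I \<times> UNIV. poisson (HF n r eps xi nu) Py p = 0
                      \<and> poisson (HF n r eps xi nu) (S1F n r eps xi nu) p = 0
                      \<and> poisson (HF n r eps xi nu) (S2F n r eps xi nu) p = 0"
  proof
    fix p :: "real \<times> real \<times> real \<times> real" assume p: "p \<in> I \<times> UNIV"
    obtain a y pa py where pe: "p = (a,y,pa,py)" by (cases p) auto
    have "a \<in> I" using p pe by auto
    thus "poisson (HF n r eps xi nu) Py p = 0
                      \<and> poisson (HF n r eps xi nu) (S1F n r eps xi nu) p = 0
                      \<and> poisson (HF n r eps xi nu) (S2F n r eps xi nu) p = 0"
      using pw[of a y pa py] unfolding pe by simp
  qed
  have ind: "fun_indep3 (I \<times> UNIV) (HF n r eps xi nu) Py S"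
    if Sdef: "S = S1F n r eps xi nu \<or> S = S2F n r eps xi nu" for S
    unfolding fun_indep3_def
  proof
    fix p :: "real \<times> real \<times> real \<times> real" assume p: "p \<in> I \<times> UNIV"
    obtain a y pa py where pe: "p = (a,y,pa,py)" by (cases p) auto
    have aI: "a \<in> I" using p pe by auto
    show "p \<in> closure {p \<in> I \<times> UNIV. lin_indep3 (grad (HF n r eps xi nu) p) (grad Py p) (grad S p)}"
      unfolding closure_approachable
    proof (intro allI impI)
      fix e :: real assume e: "e > 0"
      obtain y' pa' py' where c: "pa' \<noteq> 0" "GF n r eps xi nu (a,y',pa',py') \<noteq> 0" "S1F n r eps xi nu (a,y',pa',py') \<noteq> 0"
        "dist (a,y',pa',py') (a,y,pa,py) < e"
        using dens[OF aI e, of y pa py] by blast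
      have a0: "a \<noteq> 0" using aI assms(7) by auto
      have x0: "xdot n r eps xi nu a \<noteq> 0" using aI assms(9) by auto
      note P = pw[OF aI, of y' pa' py']
      have u2: "2 * (a / xdot n r eps xi nu a * pa') * (a / xdot n r eps xi nu a) \<noteq> 0"
        using a0 x0 c(1) by simp
      have "lin_indep3 (grad (HF n r eps xi nu) (a,y',pa',py')) (grad Py (a,y',pa',py')) (grad S (a,y',pa',py'))"
        by (rule lin_indep_crit) (use P u2 c Sdef in auto)
      moreover have "(a,y',pa',py') \<in> I \<times> UNIV" using aI by simp
      ultimately show "\<exists>x\<in>{p \<in> I \<times> UNIV. lin_indep3 (grad (HF n r eps xi nu) p) (grad Py p) (grad S p)}. dist x p < e"
        using c(4) unfolding pe by blast
    qed
  qed
  show ?thesis using br ind by blast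
qed

end
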